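(* Let $\mathcal H$ be a family of graphs. The following are equivalent: (i) there is a constant $c=c(\mathcal H)$ such that every (not necessarily connected) $\mathcal H$-free graph $G$ has fewer than $c$ vertices $v$ with $\alpha(G[N(v)])\ge 2$; (ii) there is a positive integer $n$ such that $\mathcal H\le \{K_n^*,\ nP_3,\ K_{1,n}^*,\ K_{2,n},\ E_2+K_n,\ CK_n\}$.
   Context: All graphs are finite, simple, undirected. For graphs $H_1,H_2$, write $H_1\prec H_2$ if $H_2$ contains an induced subgraph isomorphic to $H_1$. A graph $G$ is $\mathcal H$-free if no $H\in\mathcal H$ satisfies $H\prec G$. For families $\mathcal H_1,\mathcal H_2$, write $\mathcal H_1\le\mathcal H_2$ if for every $H_2\in\mathcal H_2$ there is $H_1\in\mathcal H_1$ with $H_1\prec H_2$. $N(v)$ is the neighborhood, $G[S]$ the induced subgraph, $\alpha$ the independence number. $K_n$, $E_n$, $P_n$ are the complete graph, edgeless graph, and path on $n$ vertices; $K_{s,t}$ is the complete bipartite graph; $nG$ is the disjoint union of $n$ copies of $G$; $G_1+G_2$ is the join. $K_{1,n}^*$ is obtained from the star $K_{1,n}$ by attaching a new pendant vertex to each leaf; $K_n^*$ is obtained from $K_n$ by attaching a new pendant vertex to each vertex; $CK_n$ is obtained from two disjoint copies of $K_n$ by adding a perfect matching between them. *)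

theory Defs
  imports Main
begin

text \<open>Finite simple graphs with natural-number vertices: a pair (V, E) where
  E is a set of 2-element subsets of V. Every finite graph is isomorphic to one of these.\<close>

type_synonym graph = "nat set \<times> nat set set"

definition verts :: "graph \<Rightarrow> nat set" where "verts G = fst G"
definition edges :: "graph \<Rightarrow> nat set set" where "edges G = snd G"

definition wf_graph :: "graph \<Rightarrow> bool" where
  "wf_graph G \<longleftrightarrow> finite (verts G) \<and>
     edges G \<subseteq> {{u, v} | u v. u \<in> verts G \<and> v \<in> verts G \<and> u \<noteq> v}"

definition induced_sub :: "graph \<Rightarrow> graph \<Rightarrow> bool" (infix "\<prec>" 50) where
  "H \<prec> G \<longleftrightarrow> (\<exists>f. inj_on f (verts H) \<and> f ` verts H \<subseteq> verts G \<and>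
      (\<forall>u\<in>verts H. \<forall>v\<in>verts H. {u, v} \<in> edges H \<longleftrightarrow> {f u, f v} \<in> edges G))"

definition H_free :: "graph set \<Rightarrow> graph \<Rightarrow> bool" where
  "H_free \<H> G \<longleftrightarrow> (\<forall>H\<in>\<H>. \<not> H \<prec> G)"

definition family_le :: "graph set \<Rightarrow> graph set \<Rightarrow> bool" where
  "family_le \<H>1 \<H>2 \<longleftrightarrow> (\<forall>H2\<in>\<H>2. \<exists>H1\<in>\<H>1. H1 \<prec> H2)"

definition nbhd :: "graph \<Rightarrow> nat \<Rightarrow> nat set" where
  "nbhd G v = {u \<in> verts G. {u, v} \<in> edges G}"

definition induced :: "graph \<Rightarrow> nat set \<Rightarrow> graph" where
  "induced G S = (S \<inter> verts G, {e \<in> edges G. e \<subseteq> S})"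

definition indep_set :: "graph \<Rightarrow> nat set \<Rightarrow> bool" where
  "indep_set G S \<longleftrightarrow> S \<subseteq> verts G \<and> (\<forall>u\<in>S. \<forall>v\<in>S. {u, v} \<notin> edges G)"

definition alpha :: "graph \<Rightarrow> nat" where
  "alpha G = Max {card S | S. indep_set G S}"

text \<open>K_n^*: core clique 0..n-1, pendant vertex i+n attached to i.\<close>
definition Kstar :: "nat \<Rightarrow> graph" where
  "Kstar n = ({..<2*n},
     {{i, j} | i j. i < n \<and> j < n \<and> i \<noteq> j} \<union> {{i, i + n} | i. i < n})"

definition nP3 :: "nat \<Rightarrow> graph" where
  "nP3 n = ({..<3*n},
     {{3*i, 3*i+1} | i. i < n} \<union> {{3*i+1, 3*i+2} | i. i < n})"

text \<open>K_{1,n}^*: centre 0, leaves 1..n, pendant i+n attached to leaf i.\<close>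
definition K1nstar :: "nat \<Rightarrow> graph" where
  "K1nstar n = ({..2*n},
     {{0, i} | i. 1 \<le> i \<and> i \<le> n} \<union> {{i, i + n} | i. 1 \<le> i \<and> i \<le> n})"

definition K2n :: "nat \<Rightarrow> graph" where
  "K2n n = ({..n+1}, {{a, b} | a b. a \<le> 1 \<and> 2 \<le> b \<and> b \<le> n + 1})"

definition E2K :: "nat \<Rightarrow> graph" where
  "E2K n = ({..n+1}, {{a, b} | a b. a \<le> n + 1 \<and> b \<le> n + 1 \<and> a \<noteq> b \<and> {a, b} \<noteq> {0, 1}})"

text \<open>CK_n: cliques on 0..n-1 and n..2n-1 plus the matching {i, i+n}.\<close>
definition CK :: "nat \<Rightarrow> graph" where
  "CK n = ({..<2*n},
     {{i, j} | i j. i < n \<and> j < n \<and> i \<noteq> j} \<union>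
     {{i + n, j + n} | i j. i < n \<and> j < n \<and> i \<noteq> j} \<union> {{i, i + n} | i. i < n})"

end

theory Submission
  imports Defs "HOL-Library.Ramsey"
begin

definition adj :: "graph \<Rightarrow> nat \<Rightarrow> nat \<Rightarrow> bool" where
  "adj G u v \<longleftrightarrow> {u, v} \<in> edges G"

lemma adj_sym: "adj G u v = adj G v u"
  by (simp add: adj_def insert_commute)

lemma adj_wf:
  assumes "wf_graph G" "adj G u v"
  shows "u \<in> verts G" "v \<in> verts G" "u \<noteq> v"
  using assms by (auto simp: wf_graph_def adj_def doubleton_eq_iff)

lemma adj_irrefl: "wf_graph G \<Longrightarrow> \<not> adj G u u"
  using adj_wf(3) by blast

lemma induced_subI:
  assumes "\<And>u. u \<in> verts H \<Longrightarrow> f u \<in> verts G"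
    "\<And>u v. u \<in> verts H \<Longrightarrow> v \<in> verts H \<Longrightarrow> {u,v} \<in> edges H \<longleftrightarrow> adj G (f u) (f v)"
    "\<And>u v. u \<in> verts H \<Longrightarrow> v \<in> verts H \<Longrightarrow> f u = f v \<Longrightarrow> u = v"
  shows "induced_sub H G"
  unfolding induced_sub_def
  using assms unfolding adj_def by (intro exI[of _ f]) (auto simp: inj_on_def)

lemma induced_sub_trans:
  assumes "induced_sub A B" "induced_sub B C" shows "induced_sub A C"
proof -
  obtain f where f: "inj_on f (verts A)" "f ` verts A \<subseteq> verts B"
    "\<forall>u\<in>verts A. \<forall>v\<in>verts A. {u, v} \<in> edges A \<longleftrightarrow> {f u, f v} \<in> edges B"
    using assms(1) unfolding induced_sub_def by blast
  obtain g where g: "inj_on g (verts B)" "g ` verts B \<subseteq> verts C"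
    "\<forall>u\<in>verts B. \<forall>v\<in>verts B. {u, v} \<in> edges B \<longleftrightarrow> {g u, g v} \<in> edges C"
    using assms(2) unfolding induced_sub_def by blast
  show ?thesis unfolding induced_sub_def
    apply (rule exI[of _ "g \<circ> f"])
    using f g by (auto simp: comp_inj_on inj_on_subset image_subset_iff)
qed

lemma Kstar_edge:
  "{u,v} \<in> edges (Kstar n) \<longleftrightarrow> (u<n \<and> v<n \<and> u\<noteq>v) \<or> (u<n \<and> v=u+n) \<or> (v<n \<and> u=v+n)"
  by (auto simp: Kstar_def edges_def doubleton_eq_iff)

lemma CK_edge:
  "{u,v} \<in> edges (CK n) \<longleftrightarrow> (u<n \<and> v<n \<and> u\<noteq>v) \<or> (n \<le> u \<and> u < 2*n \<and> n \<le> v \<and> v < 2*n \<and> u \<noteq> v)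
     \<or> (u<n \<and> v=u+n) \<or> (v<n \<and> u=v+n)"
  apply (auto simp: CK_def edges_def doubleton_eq_iff)
  apply (metis add.commute le_add_diff_inverse less_diff_conv2 mult_2)+
  done

lemma K1nstar_edge:
  "{u,v} \<in> edges (K1nstar n) \<longleftrightarrow> (u=0 \<and> 1 \<le> v \<and> v \<le> n) \<or> (v=0 \<and> 1 \<le> u \<and> u \<le> n)
     \<or> (1 \<le> u \<and> u \<le> n \<and> v=u+n) \<or> (1 \<le> v \<and> v \<le> n \<and> u=v+n)"
  by (auto simp: K1nstar_def edges_def doubleton_eq_iff)

lemma K2n_edge:
  "{u,v} \<in> edges (K2n n) \<longleftrightarrow> (u \<le> 1 \<and> 2 \<le> v \<and> v \<le> n+1) \<or> (v \<le> 1 \<and> 2 \<le> u \<and> u \<le> n+1)"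
  by (auto simp: K2n_def edges_def doubleton_eq_iff)

lemma E2K_edge:
  "{u,v} \<in> edges (E2K n) \<longleftrightarrow> u \<le> n+1 \<and> v \<le> n+1 \<and> u \<noteq> v \<and> \<not> (u \<le> 1 \<and> v \<le> 1)"
  by (auto simp: E2K_def edges_def doubleton_eq_iff)

lemma div3_cancel:
  fixes i l r t :: nat
  assumes "3*i + r = 3*l + t" "r < 3" "t < 3"
  shows "i = l \<and> r = t"
proof -
  have "(3*i + r) div 3 = i" "(3*i+r) mod 3 = r" using assms(2) by simp_all
  moreover have "(3*l + t) div 3 = l" "(3*l+t) mod 3 = t" using assms(3) by simp_all
  ultimately show ?thesis using assms(1) by metis
qed

lemma nP3_edge:
  assumes "r < 3" "s < 3"
  shows "{3*i+r, 3*j+s} \<in> edges (nP3 n) \<longleftrightarrow> i < n \<and> i = j \<and> ((r = 1 \<and> s \<noteq> 1) \<or> (s = 1 \<and> r \<noteq> 1))"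
proof
  assume "{3*i+r, 3*j+s} \<in> edges (nP3 n)"
  then obtain l where l: "l < n" "(3*i+r = 3*l \<and> 3*j+s = 3*l+1) \<or> (3*i+r = 3*l+1 \<and> 3*j+s = 3*l) \<or>
     (3*i+r = 3*l+1 \<and> 3*j+s = 3*l+2) \<or> (3*i+r = 3*l+2 \<and> 3*j+s = 3*l+1)"
    unfolding nP3_def edges_def by (auto simp: doubleton_eq_iff)
  then show "i < n \<and> i = j \<and> ((r = 1 \<and> s \<noteq> 1) \<or> (s = 1 \<and> r \<noteq> 1))"
    using assms div3_cancel[of i r l 0] div3_cancel[of i r l 1] div3_cancel[of i r l 2]
       div3_cancel[of j s l 0] div3_cancel[of j s l 1] div3_cancel[of j s l 2]
    by auto
next
  assume "i < n \<and> i = j \<and> ((r = 1 \<and> s \<noteq> 1) \<or> (s = 1 \<and> r \<noteq> 1))"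
  then have "i < n" "j = i" "(r = 0 \<and> s = 1) \<or> (r = 1 \<and> s = 0) \<or> (r = 1 \<and> s = 2) \<or> (r = 2 \<and> s = 1)"
    using assms by auto
  then show "{3*i+r, 3*j+s} \<in> edges (nP3 n)"
    unfolding nP3_def edges_def by (auto simp: insert_commute)
qed

lemma nP3_vert: "(u::nat) < 3*n \<Longrightarrow> \<exists>i r. u = 3*i+r \<and> r < 3 \<and> i < n"
  by (rule exI[of _ "u div 3"], rule exI[of _ "u mod 3"]) auto

lemma adj_diff: "adj G w x \<Longrightarrow> \<not> adj G w y \<Longrightarrow> x \<noteq> y"
  by auto

lemma Kstar_emb:
  assumes wf: "wf_graph G"
    and cc: "\<And>i j. i<n \<Longrightarrow> j<n \<Longrightarrow> i\<noteq>j \<Longrightarrow> adj G (c i) (c j)"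
    and cp: "\<And>i j. i<n \<Longrightarrow> j<n \<Longrightarrow> adj G (c i) (p j) \<longleftrightarrow> i = j"
    and pp: "\<And>i j. i<n \<Longrightarrow> j<n \<Longrightarrow> \<not> adj G (p i) (p j)"
  shows "induced_sub (Kstar n) G"
proof (rule induced_subI[where f="\<lambda>u. if u < n then c u else p (u - n)"])
  have V: "verts (Kstar n) = {..<2*n}" by (simp add: Kstar_def verts_def)
  fix u assume "u \<in> verts (Kstar n)"
  then show "(if u<n then c u else p (u-n)) \<in> verts G"
    using adj_wf[OF wf cp[of u u, THEN iffD2]] adj_wf[OF wf cp[of "u-n" "u-n", THEN iffD2]] V by (auto simp: Kstar_edge)
next
  fix u v assume "u \<in> verts (Kstar n)" "v \<in> verts (Kstar n)"
  then have uv: "u < 2*n" "v < 2*n" by (auto simp: Kstar_def verts_def)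
  show "{u,v} \<in> edges (Kstar n) \<longleftrightarrow> adj G (if u<n then c u else p (u-n)) (if v<n then c v else p (v-n))"
  proof (cases "u<n"; cases "v<n")
    assume "u<n" "v<n" then show ?thesis using cc[of u v] adj_irrefl[OF wf] by (auto simp: Kstar_edge)
  next
    assume "u<n" "\<not> v<n" then show ?thesis using cp[of u "v-n"] uv by (auto simp: Kstar_edge)
  next
    assume "\<not> u<n" "v<n" then show ?thesis using cp[of v "u-n"] uv adj_sym[of G "p (u-n)" "c v"] by (auto simp: Kstar_edge)
  next
    assume "\<not> u<n" "\<not> v<n" then show ?thesis using pp[of "u-n" "v-n"] uv by (auto simp: Kstar_edge)
  qed
  show "(if u<n then c u else p (u-n)) = (if v<n then c v else p (v-n)) \<Longrightarrow> u = v"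
  proof (cases "u<n"; cases "v<n")
    assume "u<n" "v<n" "(if u<n then c u else p (u-n)) = (if v<n then c v else p (v-n))"
    then show ?thesis using cc[of u v] adj_irrefl[OF wf, of "c u"] by auto
  next
    assume a: "u<n" "\<not> v<n" "(if u<n then c u else p (u-n)) = (if v<n then c v else p (v-n))"
    then have e: "c u = p (v-n)" by simp
    show ?thesis
    proof (cases "v - n = u")
      case True then show ?thesis using e cp[of u u] a adj_irrefl[OF wf, of "c u"] by auto
    next
      case False then show ?thesis using e cp[of u u] pp[of "v-n" u] a uv by auto
    qed
  next
    assume a: "\<not> u<n" "v<n" "(if u<n then c u else p (u-n)) = (if v<n then c v else p (v-n))"
    then have e: "c v = p (u-n)" by simp
    show ?thesis
    proof (cases "u - n = v")
      case True then show ?thesis using e cp[of v v] a adj_irrefl[OF wf, of "c v"] by auto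
    next
      case False then show ?thesis using e cp[of v v] pp[of "u-n" v] a uv by auto
    qed
  next
    assume a: "\<not> u<n" "\<not> v<n" "(if u<n then c u else p (u-n)) = (if v<n then c v else p (v-n))"
    then have eq: "p (u-n) = p (v-n)" by simp
    show ?thesis
    proof (rule ccontr)
      assume "u \<noteq> v"
      then have "u - n \<noteq> v - n" using a by arith
      then have "\<not> adj G (c (u-n)) (p (v-n))" using cp[of "u-n" "v-n"] uv a by simp
      moreover have "adj G (c (u-n)) (p (u-n))" using cp[of "u-n" "u-n"] uv a by simp
      ultimately show False using eq by simp
    qed
  qed
qed

lemma CK_emb:
  assumes wf: "wf_graph G"
    and cc: "\<And>i j. i<n \<Longrightarrow> j<n \<Longrightarrow> i\<noteq>j \<Longrightarrow> adj G (c i) (c j)"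
    and dd: "\<And>i j. i<n \<Longrightarrow> j<n \<Longrightarrow> i\<noteq>j \<Longrightarrow> adj G (d i) (d j)"
    and cd: "\<And>i j. i<n \<Longrightarrow> j<n \<Longrightarrow> adj G (c i) (d j) \<longleftrightarrow> i = j"
    and ne: "\<And>i j. i<n \<Longrightarrow> j<n \<Longrightarrow> c i \<noteq> d j"
  shows "induced_sub (CK n) G"
proof (rule induced_subI[where f="\<lambda>u. if u < n then c u else d (u - n)"])
  have V: "verts (CK n) = {..<2*n}" by (simp add: CK_def verts_def)
  fix u assume "u \<in> verts (CK n)"
  then show "(if u<n then c u else d (u-n)) \<in> verts G"
    using adj_wf[OF wf cd[of u u, THEN iffD2]] adj_wf[OF wf cd[of "u-n" "u-n", THEN iffD2]] V by (auto simp: CK_edge)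
next
  fix u v assume "u \<in> verts (CK n)" "v \<in> verts (CK n)"
  then have uv: "u < 2*n" "v < 2*n" by (auto simp: CK_def verts_def)
  show "{u,v} \<in> edges (CK n) \<longleftrightarrow> adj G (if u<n then c u else d (u-n)) (if v<n then c v else d (v-n))"
  proof (cases "u<n"; cases "v<n")
    assume "u<n" "v<n" then show ?thesis using cc[of u v] adj_irrefl[OF wf] by (auto simp: CK_edge)
  next
    assume "u<n" "\<not> v<n" then show ?thesis using cd[of u "v-n"] uv by (auto simp: CK_edge)
  next
    assume "\<not> u<n" "v<n" then show ?thesis using cd[of v "u-n"] uv adj_sym[of G "d (u-n)" "c v"] by (auto simp: CK_edge)
  next
    assume "\<not> u<n" "\<not> v<n" then show ?thesis using dd[of "u-n" "v-n"] uv adj_irrefl[OF wf] by (auto simp: CK_edge)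
  qed
  show "(if u<n then c u else d (u-n)) = (if v<n then c v else d (v-n)) \<Longrightarrow> u = v"
  proof (cases "u<n"; cases "v<n")
    assume "u<n" "v<n" "(if u<n then c u else d (u-n)) = (if v<n then c v else d (v-n))"
    then show ?thesis using cc[of u v] adj_irrefl[OF wf, of "c u"] by auto
  next
    assume a: "u<n" "\<not> v<n" "(if u<n then c u else d (u-n)) = (if v<n then c v else d (v-n))"
    moreover have "v - n < n" using uv a by arith
    ultimately show ?thesis using ne[of u "v-n"] by auto
  next
    assume a: "\<not> u<n" "v<n" "(if u<n then c u else d (u-n)) = (if v<n then c v else d (v-n))"
    moreover have "u - n < n" using uv a by arith
    ultimately show ?thesis using ne[of v "u-n"] by auto
  next
    assume a: "\<not> u<n" "\<not> v<n" "(if u<n then c u else d (u-n)) = (if v<n then c v else d (v-n))"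
    then have "d (u-n) = d (v-n)" by simp
    moreover have "u - n < n" "v - n < n" using uv a by arith+
    ultimately have "u - n = v - n" using dd[of "u-n" "v-n"] adj_irrefl[OF wf, of "d (u-n)"] by auto
    then show ?thesis using a by simp
  qed
qed

lemma K2n_emb:
  assumes wf: "wf_graph G"
    and uw: "a \<noteq> b" "\<not> adj G a b" and abV: "a \<in> verts G" "b \<in> verts G"
    and ax: "\<And>i. i<n \<Longrightarrow> adj G a (x i)"
    and bx: "\<And>i. i<n \<Longrightarrow> adj G b (x i)"
    and xx: "\<And>i j. i<n \<Longrightarrow> j<n \<Longrightarrow> \<not> adj G (x i) (x j)"
    and inj: "inj_on x {..<n}"
  shows "induced_sub (K2n n) G"
proof (rule induced_subI[where f="\<lambda>u. if u = 0 then a else if u = 1 then b else x (u - 2)"])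
  have V: "verts (K2n n) = {..n+1}" by (simp add: K2n_def verts_def)
  fix u assume "u \<in> verts (K2n n)"
  then show "(if u = 0 then a else if u = 1 then b else x (u - 2)) \<in> verts G"
    using V adj_wf(2)[OF wf ax[of "u-2"]] abV by auto
next
  fix u v assume "u \<in> verts (K2n n)" "v \<in> verts (K2n n)"
  then have uv: "u \<le> n+1" "v \<le> n+1" by (auto simp: K2n_def verts_def)
  have ui: "u \<ge> 2 \<Longrightarrow> u - 2 < n" "v \<ge> 2 \<Longrightarrow> v - 2 < n" using uv by arith+
  have ne: "{u} \<notin> edges (K2n n)" for u using K2n_edge[of u u n] by simp
  show "{u,v} \<in> edges (K2n n) \<longleftrightarrow> adj G (if u = 0 then a else if u = 1 then b else x (u - 2))
        (if v = 0 then a else if v = 1 then b else x (v - 2))"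
  proof -
    have cu: "u = 0 \<or> u = 1 \<or> u \<ge> 2" and cv: "v = 0 \<or> v = 1 \<or> v \<ge> 2" by arith+
    from cu cv show ?thesis
    proof (elim disjE)
    qed (use uv ax[of "u-2"] ax[of "v-2"] bx[of "u-2"] bx[of "v-2"] uw adj_sym[of G a b]
      adj_irrefl[OF wf, of a] adj_irrefl[OF wf, of b] adj_sym[of G "x (u-2)" a] adj_sym[of G "x (v-2)" a] adj_sym[of G "x (u-2)" b] adj_sym[of G "x (v-2)" b]
      xx[of "u-2" "v-2"] in \<open>simp_all add: K2n_edge ui ne\<close>)
  qed
  show "(if u = 0 then a else if u = 1 then b else x (u - 2)) =
        (if v = 0 then a else if v = 1 then b else x (v - 2)) \<Longrightarrow> u = v"
  proof -
    assume e: "(if u = 0 then a else if u = 1 then b else x (u - 2)) = (if v = 0 then a else if v = 1 then b else x (v - 2))"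
    have cu: "u = 0 \<or> u = 1 \<or> u \<ge> 2" and cv: "v = 0 \<or> v = 1 \<or> v \<ge> 2" by arith+
    from cu cv show "u = v"
    proof (elim disjE)
    qed (use e ui uw ax[of "u-2"] ax[of "v-2"] bx[of "u-2"] bx[of "v-2"] adj_irrefl[OF wf, of a]
      adj_irrefl[OF wf, of b] inj_onD[OF inj, of "u-2" "v-2"] adj_sym[of G a b] in auto)
  qed
qed

lemma E2K_emb:
  assumes wf: "wf_graph G"
    and uw: "a \<noteq> b" "\<not> adj G a b" and abV: "a \<in> verts G" "b \<in> verts G"
    and ax: "\<And>i. i<n \<Longrightarrow> adj G a (x i)"
    and bx: "\<And>i. i<n \<Longrightarrow> adj G b (x i)"
    and xx: "\<And>i j. i<n \<Longrightarrow> j<n \<Longrightarrow> i \<noteq> j \<Longrightarrow> adj G (x i) (x j)"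
  shows "induced_sub (E2K n) G"
proof (rule induced_subI[where f="\<lambda>u. if u = 0 then a else if u = 1 then b else x (u - 2)"])
  have V: "verts (E2K n) = {..n+1}" by (simp add: E2K_def verts_def)
  fix u assume "u \<in> verts (E2K n)"
  then show "(if u = 0 then a else if u = 1 then b else x (u - 2)) \<in> verts G"
    using V adj_wf(2)[OF wf ax[of "u-2"]] abV by auto
next
  fix u v assume "u \<in> verts (E2K n)" "v \<in> verts (E2K n)"
  then have uv: "u \<le> n+1" "v \<le> n+1" by (auto simp: E2K_def verts_def)
  have ui: "u \<ge> 2 \<Longrightarrow> u - 2 < n" "v \<ge> 2 \<Longrightarrow> v - 2 < n" using uv by arith+
  have uvx: "u \<ge> 2 \<Longrightarrow> v \<ge> 2 \<Longrightarrow> adj G (x (u-2)) (x (v-2)) = (u \<noteq> v)"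
    using adj_irrefl[OF wf] xx[of "u-2" "v-2"] ui by (cases "u = v") auto
  have uvd: "u \<ge> 2 \<Longrightarrow> v \<ge> 2 \<Longrightarrow> (u - 2 = v - 2) = (u = v)" by arith
  have ne: "{u} \<notin> edges (E2K n)" for u using E2K_edge[of u u n] by simp
  have xi: "x (u-2) = x (v-2) \<Longrightarrow> u \<ge> 2 \<Longrightarrow> v \<ge> 2 \<Longrightarrow> u = v"
    using xx[of "u-2" "v-2"] adj_irrefl[OF wf] uv by fastforce
  show "{u,v} \<in> edges (E2K n) \<longleftrightarrow> adj G (if u = 0 then a else if u = 1 then b else x (u - 2))
        (if v = 0 then a else if v = 1 then b else x (v - 2))"
  proof -
    have cu: "u = 0 \<or> u = 1 \<or> u \<ge> 2" and cv: "v = 0 \<or> v = 1 \<or> v \<ge> 2" by arith+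
    from cu cv show ?thesis
    proof (elim disjE)
    qed (use uv ax[of "u-2"] ax[of "v-2"] bx[of "u-2"] bx[of "v-2"] uw adj_sym[of G a b]
      adj_irrefl[OF wf, of a] adj_irrefl[OF wf, of b] adj_sym[of G "x (u-2)" a] adj_sym[of G "x (v-2)" a] adj_sym[of G "x (u-2)" b] adj_sym[of G "x (v-2)" b]
      xx[of "u-2" "v-2"] adj_irrefl[OF wf, of "x (u-2)"] in \<open>simp_all add: E2K_edge ui ne uvd uvx\<close>)
  qed
  show "(if u = 0 then a else if u = 1 then b else x (u - 2)) =
        (if v = 0 then a else if v = 1 then b else x (v - 2)) \<Longrightarrow> u = v"
  proof -
    assume e: "(if u = 0 then a else if u = 1 then b else x (u - 2)) = (if v = 0 then a else if v = 1 then b else x (v - 2))"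
    have cu: "u = 0 \<or> u = 1 \<or> u \<ge> 2" and cv: "v = 0 \<or> v = 1 \<or> v \<ge> 2" by arith+
    from cu cv show "u = v"
    proof (elim disjE)
    qed (use e ui uw ax[of "u-2"] ax[of "v-2"] bx[of "u-2"] bx[of "v-2"] adj_irrefl[OF wf, of a]
      adj_irrefl[OF wf, of b] xi adj_sym[of G a b] in auto)
  qed
qed

lemma K1nstar_emb:
  assumes wf: "wf_graph G"
    and zV: "z \<in> verts G"
    and zl: "\<And>i. i<n \<Longrightarrow> adj G z (l i)"
    and zp: "\<And>i. i<n \<Longrightarrow> \<not> adj G z (p i)"
    and zp': "\<And>i. i<n \<Longrightarrow> z \<noteq> p i"
    and lp: "\<And>i j. i<n \<Longrightarrow> j<n \<Longrightarrow> adj G (l i) (p j) \<longleftrightarrow> i = j"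
    and ll: "\<And>i j. i<n \<Longrightarrow> j<n \<Longrightarrow> \<not> adj G (l i) (l j)"
    and pp: "\<And>i j. i<n \<Longrightarrow> j<n \<Longrightarrow> \<not> adj G (p i) (p j)"
  shows "induced_sub (K1nstar n) G"
proof (rule induced_subI[where f="\<lambda>u. if u = 0 then z else if u \<le> n then l (u - 1) else p (u - n - 1)"])
  have V: "verts (K1nstar n) = {..2*n}" by (simp add: K1nstar_def verts_def)
  fix u assume "u \<in> verts (K1nstar n)"
  then show "(if u = 0 then z else if u \<le> n then l (u - 1) else p (u - n - 1)) \<in> verts G"
    using V adj_wf(2)[OF wf zl[of "u-1"]] adj_wf(2)[OF wf lp[of "u-n-1" "u-n-1", THEN iffD2]] zV
    by auto
next
  fix u v assume "u \<in> verts (K1nstar n)" "v \<in> verts (K1nstar n)"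
  then have uv: "u \<le> 2*n" "v \<le> 2*n" by (auto simp: K1nstar_def verts_def)
  have cu: "u = 0 \<or> (1 \<le> u \<and> u \<le> n) \<or> (n < u \<and> u \<le> 2*n)"
   and cv: "v = 0 \<or> (1 \<le> v \<and> v \<le> n) \<or> (n < v \<and> v \<le> 2*n)" using uv by arith+
  have ui: "1 \<le> u \<Longrightarrow> u \<le> n \<Longrightarrow> u - 1 < n" "n < u \<Longrightarrow> u \<le> 2*n \<Longrightarrow> u - n - 1 < n"
    "1 \<le> v \<Longrightarrow> v \<le> n \<Longrightarrow> v - 1 < n" "n < v \<Longrightarrow> v \<le> 2*n \<Longrightarrow> v - n - 1 < n" by arith+
  have ed: "1 \<le> u \<Longrightarrow> u \<le> n \<Longrightarrow> n < v \<Longrightarrow> (v = u+n) = (u-1 = v-n-1)"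
    "1 \<le> v \<Longrightarrow> v \<le> n \<Longrightarrow> n < u \<Longrightarrow> (u = v+n) = (v-1 = u-n-1)"
    "1 \<le> u \<Longrightarrow> 1 \<le> v \<Longrightarrow> (u - 1 = v - 1) = (u = v)"
    "n < u \<Longrightarrow> n < v \<Longrightarrow> (u - n - 1 = v - n - 1) = (u = v)" by arith+
  have ne: "{w} \<notin> edges (K1nstar n)" for w using K1nstar_edge[of w w n] by simp
  show "{u,v} \<in> edges (K1nstar n) \<longleftrightarrow> adj G (if u = 0 then z else if u \<le> n then l (u - 1) else p (u - n - 1))
        (if v = 0 then z else if v \<le> n then l (v - 1) else p (v - n - 1))"
    using cu cv
  proof (elim disjE conjE)
  qed (use zl[of "u-1"] zl[of "v-1"] zp[of "u-n-1"] zp[of "v-n-1"] lp[of "u-1" "v-n-1"] lp[of "v-1" "u-n-1"]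
      ll[of "u-1" "v-1"] pp[of "u-n-1" "v-n-1"] adj_irrefl[OF wf, of z] adj_sym[of G "l (u-1)" z]
      adj_sym[of G "p (u-n-1)" z] adj_sym[of G "p (u-n-1)" "l (v-1)"] ui ed ne in \<open>simp_all add: K1nstar_edge\<close>)
  show "(if u = 0 then z else if u \<le> n then l (u - 1) else p (u - n - 1)) =
        (if v = 0 then z else if v \<le> n then l (v - 1) else p (v - n - 1)) \<Longrightarrow> u = v"
  proof -
    assume e: "(if u = 0 then z else if u \<le> n then l (u - 1) else p (u - n - 1)) =
        (if v = 0 then z else if v \<le> n then l (v - 1) else p (v - n - 1))"
    have d1: "i<n \<Longrightarrow> z \<noteq> l i" for i using zl[of i] adj_irrefl[OF wf, of z] by auto
    have d3: "i<n \<Longrightarrow> j<n \<Longrightarrow> l i \<noteq> p j" for i j using zl[of i] zp[of j] by auto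
    have d4: "i = j" if "i<n" "j<n" "l i = l j" for i j
    proof -
      have "adj G (l i) (p i)" using lp[of i i] that(1) by simp
      then have "adj G (l j) (p i)" using that(3) by simp
      then show ?thesis using lp[of j i] that(1,2) by simp
    qed
    have d5: "i = j" if "i<n" "j<n" "p i = p j" for i j
    proof -
      have "adj G (l i) (p i)" using lp[of i i] that(1) by simp
      then have "adj G (l i) (p j)" using that(3) by simp
      then show ?thesis using lp[of i j] that(1,2) by simp
    qed
    from cu show "u = v"
    proof (elim disjE conjE)
      assume u: "u = 0"
      then have lu: "z = (if v = 0 then z else if v \<le> n then l (v - 1) else p (v - n - 1))" using e by simp
      from cv show ?thesis
      proof (elim disjE conjE)
        assume "v = 0" then show ?thesis using u by simp
      next
        assume v: "1 \<le> v" "v \<le> n"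
        then have "z = l (v-1)" using lu by simp
        then show ?thesis using d1[of "v-1"] v ui by simp
      next
        assume v: "n < v" "v \<le> 2*n"
        then have "z = p (v-n-1)" using lu by simp
        then show ?thesis using zp'[of "v-n-1"] v ui by simp
      qed
    next
      assume u: "1 \<le> u" "u \<le> n"
      then have lu: "l (u-1) = (if v = 0 then z else if v \<le> n then l (v - 1) else p (v - n - 1))" using e by simp
      from cv show ?thesis
      proof (elim disjE conjE)
        assume "v = 0" then show ?thesis using lu d1[of "u-1"] u ui by auto
      next
        assume v: "1 \<le> v" "v \<le> n"
        then have "l (u-1) = l (v-1)" using lu by simp
        then have "u - 1 = v - 1" using d4 u v ui by blast
        then show ?thesis using u v by arith
      next
        assume v: "n < v" "v \<le> 2*n"
        then have "l (u-1) = p (v-n-1)" using lu by simp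
        then show ?thesis using d3[of "u-1" "v-n-1"] u v ui by simp
      qed
    next
      assume u: "n < u" "u \<le> 2*n"
      then have lu: "p (u-n-1) = (if v = 0 then z else if v \<le> n then l (v - 1) else p (v - n - 1))" using e by simp
      from cv show ?thesis
      proof (elim disjE conjE)
        assume "v = 0" then show ?thesis using lu zp'[of "u-n-1"] u ui by auto
      next
        assume v: "1 \<le> v" "v \<le> n"
        then have "p (u-n-1) = l (v-1)" using lu by simp
        then show ?thesis using d3[of "v-1" "u-n-1"] u v ui by simp
      next
        assume v: "n < v" "v \<le> 2*n"
        then have "p (u-n-1) = p (v-n-1)" using lu by simp
        then have "u-n-1 = v-n-1" using d5 u v ui by blast
        then show ?thesis using u v by arith
      qed
    qed
  qed
qed

lemma nP3_emb:
  fixes T :: "nat \<Rightarrow> nat \<Rightarrow> nat"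
  assumes wf: "wf_graph G"
    and TT: "\<And>i j (r::nat) s. i<n \<Longrightarrow> j<n \<Longrightarrow> r<3 \<Longrightarrow> s<3 \<Longrightarrow>
        adj G (T i r) (T j s) \<longleftrightarrow> i = j \<and> ((r = 1 \<and> s \<noteq> 1) \<or> (s = 1 \<and> r \<noteq> 1))"
    and ne: "\<And>i. i<n \<Longrightarrow> T i 0 \<noteq> T i 2"
  shows "induced_sub (nP3 n) G"
proof (rule induced_subI[where f="\<lambda>u. T (u div 3) (u mod 3)"])
  have V: "verts (nP3 n) = {..<3*n}" by (simp add: nP3_def verts_def)
  fix u assume "u \<in> verts (nP3 n)"
  then have "u < 3*n" using V by simp
  then obtain i r where "u = 3*i+r \<and> r<3 \<and> i<n" using nP3_vert by blast
  then have u: "u = 3*i+r" "r<3" "i<n" by auto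
  then have "T (u div 3) (u mod 3) = T i r" by simp
  moreover have "adj G (T i r) (T i (if r = 1 then 0 else 1))" using TT[of i i r "if r = 1 then 0 else 1"] u by auto
  ultimately show "T (u div 3) (u mod 3) \<in> verts G" using adj_wf(1)[OF wf] by simp
next
  fix u v assume "u \<in> verts (nP3 n)" "v \<in> verts (nP3 n)"
  have V: "verts (nP3 n) = {..<3*n}" by (simp add: nP3_def verts_def)
  have "u < 3*n" "v < 3*n" using V \<open>u \<in> verts (nP3 n)\<close> \<open>v \<in> verts (nP3 n)\<close> by simp_all
  then obtain i r j s where "u = 3*i+r \<and> r<3 \<and> i<n" "v = 3*j+s \<and> s<3 \<and> j<n" using nP3_vert by meson
  then have u: "u = 3*i+r" "r<3" "i<n" and v: "v = 3*j+s" "s<3" "j<n" by auto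
  then have e: "T (u div 3) (u mod 3) = T i r" "T (v div 3) (v mod 3) = T j s" by simp_all
  show "{u,v} \<in> edges (nP3 n) \<longleftrightarrow> adj G (T (u div 3) (u mod 3)) (T (v div 3) (v mod 3))"
  proof -
    have E: "{u,v} \<in> edges (nP3 n) \<longleftrightarrow> i = j \<and> ((r = 1 \<and> s \<noteq> 1) \<or> (s = 1 \<and> r \<noteq> 1))"
      using nP3_edge[OF u(2) v(2), of i j n] u(3) unfolding u(1) v(1) by simp
    show ?thesis unfolding e using E TT[OF u(3) v(3) u(2) v(2)] by simp
  qed
  show "T (u div 3) (u mod 3) = T (v div 3) (v mod 3) \<Longrightarrow> u = v"
  proof -
    assume "T (u div 3) (u mod 3) = T (v div 3) (v mod 3)"
    then have eq: "T i r = T j s" using e by simp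
    define r' where "r' = (if r = 1 then 0 else (1::nat))"
    have r': "r' < 3" unfolding r'_def by simp
    have a1: "adj G (T i r) (T i r')" using TT[OF u(3) u(3) u(2) r'] unfolding r'_def by auto
    have "i = j"
    proof (rule ccontr)
      assume "i \<noteq> j"
      then have "\<not> adj G (T j s) (T i r')" using TT[OF v(3) u(3) v(2) r'] by auto
      then show False using a1 eq by simp
    qed
    moreover have "r = s"
    proof (rule ccontr)
      assume "r \<noteq> s"
      show False
      proof (cases "r = 1 \<or> s = 1")
        case True
        then have "adj G (T i r) (T j s)" using TT[OF u(3) v(3) u(2) v(2)] \<open>i = j\<close> \<open>r \<noteq> s\<close> by auto
        then show False using eq adj_irrefl[OF wf] by simp
      next
        case False
        then have "(r = 0 \<and> s = 2) \<or> (r = 2 \<and> s = 0)" using u v \<open>r \<noteq> s\<close> by auto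
        then show False using ne[OF u(3)] eq \<open>i = j\<close> by auto
      qed
    qed
    ultimately show "u = v" using u v by simp
  qed
qed


definition forb :: "graph \<Rightarrow> nat \<Rightarrow> bool" where
  "forb G n \<longleftrightarrow> induced_sub (Kstar n) G \<or> induced_sub (nP3 n) G \<or> induced_sub (K1nstar n) G \<or>
     induced_sub (K2n n) G \<or> induced_sub (E2K n) G \<or> induced_sub (CK n) G"

lemma enum_finite:
  fixes A :: "nat set"
  assumes "finite A"
  obtains e where "\<And>i. i < card A \<Longrightarrow> e i \<in> A" "\<And>i j. i < j \<Longrightarrow> j < card A \<Longrightarrow> e i < e j"
proof -
  define xs where "xs = sorted_list_of_set A"
  have s: "sorted_wrt (<) xs" unfolding xs_def by (rule strict_sorted_list_of_set)
  have l: "length xs = card A" unfolding xs_def using assms by simp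
  have st: "set xs = A" unfolding xs_def using assms by simp
  show ?thesis
  proof (rule that[of "\<lambda>i. xs ! i"])
    show "xs ! i \<in> A" if "i < card A" for i using that l st nth_mem by metis
    show "xs ! i < xs ! j" if "i < j" "j < card A" for i j using sorted_wrt_nth_less[OF s that(1)] that l by simp
  qed
qed

lemma ordered_ramsey:
  fixes k :: nat
  shows "\<exists>N. \<forall>col :: nat \<Rightarrow> nat \<Rightarrow> 'c::finite. \<exists>g. (\<forall>i<k. g i < N) \<and> (\<forall>i j. i<j \<longrightarrow> j<k \<longrightarrow> g i < g j) \<and>
     (\<forall>i j i' j'. i<j \<longrightarrow> j<k \<longrightarrow> i'<j' \<longrightarrow> j'<k \<longrightarrow> col (g i) (g j) = col (g i') (g j'))"
proof -
  obtain h :: "'c \<Rightarrow> nat" where h: "bij_betw h UNIV {0..<card (UNIV::'c set)}"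
    using ex_bij_betw_finite_nat[of "UNIV :: 'c set"] by auto
  obtain N :: nat where N: "partn_lst {..<N} (replicate (card (UNIV::'c set)) k) 2"
    using ramsey_full by blast
  have "\<exists>g. (\<forall>i<k. g i < N) \<and> (\<forall>i j. i<j \<longrightarrow> j<k \<longrightarrow> g i < g j) \<and>
     (\<forall>i j i' j'. i<j \<longrightarrow> j<k \<longrightarrow> i'<j' \<longrightarrow> j'<k \<longrightarrow> col (g i) (g j) = col (g i') (g j'))"
    for col :: "nat \<Rightarrow> nat \<Rightarrow> 'c"
  proof -
    define f where "f X = h (col (Min X) (Max X))" for X
    have f: "f \<in> nsets {..<N} 2 \<rightarrow> {..<length (replicate (card (UNIV::'c set)) k)}"
      using h unfolding f_def bij_betw_def by auto
    obtain c H where c: "c < length (replicate (card (UNIV::'c set)) k)"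
      and H: "H \<in> nsets {..<N} ((replicate (card (UNIV::'c set)) k) ! c)"
      and hom: "f ` (nsets H 2) \<subseteq> {c}"
      using partn_lstE[OF N f] by blast
    have Hk: "H \<subseteq> {..<N}" "finite H" "card H = k" using H c unfolding nsets_def by auto
    obtain e where e: "\<And>i. i < card H \<Longrightarrow> e i \<in> H" "\<And>i j. i < j \<Longrightarrow> j < card H \<Longrightarrow> e i < e j"
      using enum_finite[OF Hk(2)] by blast
    have fc: "h (col (e i) (e j)) = c" if "i < j" "j < k" for i j
    proof -
      have "{e i, e j} \<in> nsets H 2" using e that Hk unfolding nsets_def by fastforce
      then have "f {e i, e j} = c" using hom by blast
      moreover have "Min {e i, e j} = e i" "Max {e i, e j} = e j" using e(2)[of i j] that Hk by auto
      ultimately show ?thesis unfolding f_def by simp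
    qed
    show ?thesis
    proof (intro exI[of _ e] conjI allI impI)
      show "e i < N" if "i < k" for i using e(1)[of i] that Hk by auto
      show "e i < e j" if "i < j" "j < k" for i j using e(2) that Hk by auto
      show "col (e i) (e j) = col (e i') (e j')" if "i < j" "j < k" "i' < j'" "j' < k" for i j i' j'
        using fc[of i j] fc[of i' j'] that h unfolding bij_betw_def inj_on_def by auto
    qed
  qed
  then show ?thesis by blast
qed

lemma common_ex:
  fixes n :: nat
  shows "\<exists>R. \<forall>G u w C. wf_graph G \<and> u \<noteq> w \<and> \<not> adj G u w \<and> finite C \<and> R \<le> card C \<and>
     (\<forall>c\<in>C. adj G u c \<and> adj G w c) \<longrightarrow> forb G n"
proof -
  obtain r where r: "r \<ge> 1" "\<forall>(V::nat set) (E::nat set set). finite V \<and> card V \<ge> r \<longrightarrow>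
    (\<exists>R \<subseteq> V. card R = n \<and> clique R E \<or> card R = n \<and> indep R E)"
    using ramsey2[of n n] by blast
  have "forb G n" if G: "wf_graph G" "u \<noteq> w" "\<not> adj G u w" "finite C" "r \<le> card C"
     "\<forall>c\<in>C. adj G u c \<and> adj G w c" for G u w C
  proof -
    have "C \<noteq> {}" using G(5) r(1) by auto
    then obtain c0 where "c0 \<in> C" by blast
    then have uwV: "u \<in> verts G" "w \<in> verts G" using G(6) adj_wf[OF G(1)] by blast+
    obtain R where R: "R \<subseteq> C" "card R = n" "clique R (edges G) \<or> indep R (edges G)"
      using r(2)[rule_format, of C "edges G"] G(4,5) by blast
    have fR: "finite R" using R(1) G(4) finite_subset by blast
    obtain x where x: "bij_betw x {0..<n} R" using ex_bij_betw_nat_finite[OF fR] R(2) by auto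
    have xR: "i < n \<Longrightarrow> x i \<in> R" for i using x unfolding bij_betw_def by auto
    have xinj: "inj_on x {..<n}" using x unfolding bij_betw_def by (simp add: atLeast0LessThan)
    have ux: "adj G u (x i)" "adj G w (x i)" if "i < n" for i
    proof -
      have "x i \<in> C" using xR[OF that] R(1) by blast
      then show "adj G u (x i)" "adj G w (x i)" using G(6) by auto
    qed
    show ?thesis using R(3)
    proof
      assume cl: "clique R (edges G)"
      have "induced_sub (E2K n) G"
      proof (rule E2K_emb[OF G(1) G(2) G(3) uwV, where x=x])
        show "adj G u (x i)" "adj G w (x i)" if "i < n" for i using ux that by auto
        show "adj G (x i) (x j)" if "i<n" "j<n" "i\<noteq>j" for i j
        proof -
          have "x i \<noteq> x j" using inj_onD[OF xinj, of i j] that by auto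
          then show ?thesis using cl xR[OF that(1)] xR[OF that(2)] unfolding clique_def adj_def by blast
        qed
      qed
      then show ?thesis unfolding forb_def by blast
    next
      assume cl: "indep R (edges G)"
      have "induced_sub (K2n n) G"
      proof (rule K2n_emb[OF G(1) G(2) G(3) uwV, where x=x])
        show "adj G u (x i)" "adj G w (x i)" if "i < n" for i using ux that by auto
        show "\<not> adj G (x i) (x j)" if "i<n" "j<n" for i j
        proof (cases "i = j")
          case True then show ?thesis using adj_irrefl[OF G(1), of "x i"] by simp
        next
          case False
          then have "x i \<noteq> x j" using inj_onD[OF xinj, of i j] that by auto
          then show ?thesis using cl xR[OF that(1)] xR[OF that(2)] unfolding indep_def adj_def by blast
        qed
        show "inj_on x {..<n}" by (rule xinj)
      qed
      then show ?thesis unfolding forb_def by blast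
    qed
  qed
  then show ?thesis by blast
qed

lemma alpha_ge2_iff:
  assumes wf: "wf_graph G"
  shows "alpha (induced G (nbhd G v)) \<ge> 2 \<longleftrightarrow> (\<exists>a b. adj G v a \<and> adj G v b \<and> a \<noteq> b \<and> \<not> adj G a b)"
proof -
  let ?H = "induced G (nbhd G v)"
  have vH: "verts ?H = nbhd G v" unfolding induced_def nbhd_def by (auto simp: verts_def)
  have eH: "edges ?H = {e \<in> edges G. e \<subseteq> nbhd G v}" unfolding induced_def by (simp add: edges_def)
  have ind: "indep_set ?H T \<longleftrightarrow> T \<subseteq> nbhd G v \<and> (\<forall>a\<in>T. \<forall>b\<in>T. \<not> adj G a b)" for T
    unfolding indep_set_def vH eH adj_def by blast
  have nb: "a \<in> nbhd G v \<longleftrightarrow> adj G v a" for a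
  proof -
    have "{a, v} = {v, a}" by (rule insert_commute)
    then show ?thesis using adj_wf(2)[OF wf, of v a] unfolding nbhd_def adj_def by auto
  qed
  have nbV: "nbhd G v \<subseteq> verts G" unfolding nbhd_def by blast
  have fin: "finite {card T | T. indep_set ?H T}"
  proof -
    have "{card T | T. indep_set ?H T} \<subseteq> card ` Pow (verts G)"
    proof
      fix c assume "c \<in> {card T | T. indep_set ?H T}"
      then obtain T where "c = card T" "indep_set ?H T" by blast
      then have "T \<subseteq> verts G" using ind nbV by blast
      then show "c \<in> card ` Pow (verts G)" using \<open>c = card T\<close> by blast
    qed
    moreover have "finite (verts G)" using wf unfolding wf_graph_def by simp
    ultimately show ?thesis using finite_subset by blast
  qed
  have e0: "indep_set ?H {}" unfolding ind by simp
  show ?thesis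
  proof
    assume a2: "alpha ?H \<ge> 2"
    have "alpha ?H \<in> {card T | T. indep_set ?H T}"
      unfolding alpha_def by (rule Max_in[OF fin]) (use e0 in blast)
    then obtain T where T: "indep_set ?H T" "card T \<ge> 2" using a2 by auto
    then have "finite T" by (metis card.infinite not_numeral_le_zero)
    then obtain a b where ab: "a \<in> T" "b \<in> T" "a \<noteq> b" using T(2) card_le_Suc0_iff_eq[of T] by auto
    have "T \<subseteq> nbhd G v" "\<forall>a\<in>T. \<forall>b\<in>T. \<not> adj G a b" using T(1) unfolding ind by auto
    then show "\<exists>a b. adj G v a \<and> adj G v b \<and> a \<noteq> b \<and> \<not> adj G a b" using ab nb by blast
  next
    assume "\<exists>a b. adj G v a \<and> adj G v b \<and> a \<noteq> b \<and> \<not> adj G a b"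
    then obtain a b where ab: "adj G v a" "adj G v b" "a \<noteq> b" "\<not> adj G a b" by blast
    have "indep_set ?H {a, b}" unfolding ind using ab nb adj_irrefl[OF wf, of a] adj_irrefl[OF wf, of b]
      adj_sym[of G a b] by auto
    then have "card {a,b} \<le> alpha ?H" unfolding alpha_def by (intro Max_ge[OF fin]) blast
    then show "alpha ?H \<ge> 2" using ab by simp
  qed
qed


lemma adj_ne: "wf_graph G \<Longrightarrow> adj G u v \<Longrightarrow> u \<noteq> v"
  using adj_wf(3) by blast

lemma match_core:
  assumes wf: "wf_graph G" and K: "3 \<le> K" "n \<le> K"
    and xx: "\<And>i j. i<K \<Longrightarrow> j<K \<Longrightarrow> i\<noteq>j \<Longrightarrow> adj G (x i) (x j)"
    and xy: "\<And>i j. i<K \<Longrightarrow> j<K \<Longrightarrow> adj G (x i) (y j) \<longleftrightarrow> i = j"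
    and yy: "\<And>i j. i<j \<Longrightarrow> j<K \<Longrightarrow> adj G (y i) (y j) = p"
  shows "forb G n"
proof -
  have ne: "x i \<noteq> y j" if "i<K" "j<K" for i j
  proof (cases "i = j")
    case True
    then show ?thesis using xy[OF that] adj_ne[OF wf] by auto
  next
    case False
    obtain l where l: "l < K" "l \<noteq> i" "l \<noteq> j"
    proof -
      have "\<exists>l\<in>{0,1,2::nat}. l \<noteq> i \<and> l \<noteq> j" by auto
      then obtain l where "l \<in> {0,1,2::nat}" "l \<noteq> i" "l \<noteq> j" by blast
      moreover have "l < K" using calculation(1) K by auto
      ultimately show ?thesis using that by blast
    qed
    have "adj G (x l) (x i)" using xx[of l i] l that by simp
    moreover have "\<not> adj G (x l) (y j)" using xy[of l j] l that by simp
    ultimately show ?thesis by auto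
  qed
  have yy': "adj G (y i) (y j) = p" if "i<K" "j<K" "i\<noteq>j" for i j
  proof (cases "i < j")
    case True then show ?thesis using yy[of i j] that by simp
  next
    case False then have "j < i" using that by simp
    then show ?thesis using yy[of j i] that adj_sym[of G "y i" "y j"] by simp
  qed
  show ?thesis
  proof (cases p)
    case True
    have "induced_sub (CK n) G"
    proof (rule CK_emb[OF wf])
      show "adj G (x i) (x j)" if "i<n" "j<n" "i\<noteq>j" for i j using xx[of i j] that K by simp
      show "adj G (y i) (y j)" if "i<n" "j<n" "i\<noteq>j" for i j using yy'[of i j] that K True by simp
      show "adj G (x i) (y j) \<longleftrightarrow> i = j" if "i<n" "j<n" for i j using xy[of i j] that K by simp
      show "x i \<noteq> y j" if "i<n" "j<n" for i j using ne[of i j] that K by simp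
    qed
    then show ?thesis unfolding forb_def by blast
  next
    case False
    have "induced_sub (Kstar n) G"
    proof (rule Kstar_emb[OF wf])
      show "adj G (x i) (x j)" if "i<n" "j<n" "i\<noteq>j" for i j using xx[of i j] that K by simp
      show "adj G (x i) (y j) \<longleftrightarrow> i = j" if "i<n" "j<n" for i j using xy[of i j] that K by simp
      show "\<not> adj G (y i) (y j)" if "i<n" "j<n" for i j
      proof (cases "i = j")
        case True then show ?thesis using adj_irrefl[OF wf, of "y i"] by simp
      next
        case False then show ?thesis using yy'[of i j] that K \<open>\<not> p\<close> by simp
      qed
    qed
    then show ?thesis unfolding forb_def by blast
  qed
qed

lemma inj_from_adj:
  assumes wf: "wf_graph G" and xx: "\<And>i j. i<K \<Longrightarrow> j<K \<Longrightarrow> i\<noteq>j \<Longrightarrow> adj G (x i) (x j)"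
  shows "inj_on x {..<K}"
proof (rule inj_onI)
  fix i j assume "i \<in> {..<K}" "j \<in> {..<K}" "x i = x j"
  then show "i = j" using xx[of i j] adj_irrefl[OF wf, of "x i"] by auto
qed

lemma half_core:
  assumes wf: "wf_graph G" and K: "R + 3 \<le> K"
    and Rp: "\<And>u w C. u \<noteq> w \<Longrightarrow> \<not> adj G u w \<Longrightarrow> finite C \<Longrightarrow> R \<le> card C \<Longrightarrow>
              (\<And>c. c \<in> C \<Longrightarrow> adj G u c \<and> adj G w c) \<Longrightarrow> forb G n"
    and xx: "\<And>i j. i<K \<Longrightarrow> j<K \<Longrightarrow> i\<noteq>j \<Longrightarrow> adj G (x i) (x j)"
    and xy: "\<And>i. i<K \<Longrightarrow> adj G (x i) (y i)"
    and f: "\<And>i j. i<j \<Longrightarrow> j<K \<Longrightarrow> adj G (y i) (x j)"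
    and b: "\<And>i j. i<j \<Longrightarrow> j<K \<Longrightarrow> \<not> adj G (y j) (x i)"
  shows "forb G n"
proof (rule Rp[of "y 2" "x 1" "x ` {2..<K}"])
  have "adj G (x 0) (x 1)" using xx[of 0 1] K by simp
  moreover have "\<not> adj G (x 0) (y 2)" using b[of 0 2] K adj_sym[of G "x 0" "y 2"] by simp
  ultimately show "y 2 \<noteq> x 1" by auto
  show "\<not> adj G (y 2) (x 1)" using b[of 1 2] K by simp
  show "finite (x ` {2..<K})" by simp
  have "inj_on x {..<K}" by (rule inj_from_adj[OF wf]) (use xx in auto)
  then have "inj_on x {2..<K}" by (rule inj_on_subset) auto
  then show "R \<le> card (x ` {2..<K})" using K by (simp add: card_image)
  fix c assume "c \<in> x ` {2..<K}"
  then obtain l where l: "2 \<le> l" "l < K" "c = x l" by auto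
  show "adj G (y 2) c \<and> adj G (x 1) c"
  proof
    show "adj G (y 2) c"
    proof (cases "l = 2")
      case True then show ?thesis using xy[of 2] l adj_sym[of G "x 2" "y 2"] by simp
    next
      case False then show ?thesis using f[of 2 l] l by simp
    qed
    show "adj G (x 1) c" using xx[of 1 l] l by simp
  qed
qed

lemma half_core':
  assumes wf: "wf_graph G" and K: "R + 3 \<le> K"
    and Rp: "\<And>u w C. u \<noteq> w \<Longrightarrow> \<not> adj G u w \<Longrightarrow> finite C \<Longrightarrow> R \<le> card C \<Longrightarrow>
              (\<And>c. c \<in> C \<Longrightarrow> adj G u c \<and> adj G w c) \<Longrightarrow> forb G n"
    and xx: "\<And>i j. i<K \<Longrightarrow> j<K \<Longrightarrow> i\<noteq>j \<Longrightarrow> adj G (x i) (x j)"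
    and xy: "\<And>i. i<K \<Longrightarrow> adj G (x i) (y i)"
    and f: "\<And>i j. i<j \<Longrightarrow> j<K \<Longrightarrow> \<not> adj G (y i) (x j)"
    and b: "\<And>i j. i<j \<Longrightarrow> j<K \<Longrightarrow> adj G (y j) (x i)"
  shows "forb G n"
proof (rule Rp[of "y (K-3)" "x (K-2)" "x ` {..<K-2}"])
  have "adj G (x (K-1)) (x (K-2))" using xx[of "K-1" "K-2"] K by simp
  moreover have "\<not> adj G (x (K-1)) (y (K-3))" using f[of "K-3" "K-1"] K adj_sym[of G "x (K-1)" "y (K-3)"] by simp
  ultimately show "y (K-3) \<noteq> x (K-2)" by auto
  show "\<not> adj G (y (K-3)) (x (K-2))" using f[of "K-3" "K-2"] K by simp
  show "finite (x ` {..<K-2})" by simp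
  have "inj_on x {..<K}" by (rule inj_from_adj[OF wf]) (use xx in auto)
  then have "inj_on x {..<K-2}" by (rule inj_on_subset) auto
  then show "R \<le> card (x ` {..<K-2})" using K by (simp add: card_image)
  fix c assume "c \<in> x ` {..<K-2}"
  then obtain l where l: "l < K-2" "c = x l" by auto
  show "adj G (y (K-3)) c \<and> adj G (x (K-2)) c"
  proof
    show "adj G (y (K-3)) c"
    proof (cases "l = K-3")
      case True then show ?thesis using xy[of "K-3"] l K adj_sym[of G "x (K-3)" "y (K-3)"] by simp
    next
      case False then show ?thesis using b[of l "K-3"] l K by simp
    qed
    show "adj G (x (K-2)) c" using xx[of "K-2" l] l K by simp
  qed
qed


lemma clique_core:
  assumes wf: "wf_graph G" and K: "R + n + 3 \<le> K"
    and Rp: "\<And>u w C. u \<noteq> w \<Longrightarrow> \<not> adj G u w \<Longrightarrow> finite C \<Longrightarrow> R \<le> card C \<Longrightarrow>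
              (\<And>c. c \<in> C \<Longrightarrow> adj G u c \<and> adj G w c) \<Longrightarrow> forb G n"
    and xx: "\<And>i j. i<K \<Longrightarrow> j<K \<Longrightarrow> i\<noteq>j \<Longrightarrow> adj G (x i) (x j)"
    and xa: "\<And>i. i<K \<Longrightarrow> adj G (x i) (a i)"
    and xb: "\<And>i. i<K \<Longrightarrow> adj G (x i) (b i)"
    and ab: "\<And>i. i<K \<Longrightarrow> \<not> adj G (a i) (b i)"
    and ab': "\<And>i. i<K \<Longrightarrow> a i \<noteq> b i"
    and P1: "\<And>i j. i<j \<Longrightarrow> j<K \<Longrightarrow> adj G (a i) (x j) = p1"
    and P2: "\<And>i j. i<j \<Longrightarrow> j<K \<Longrightarrow> adj G (a j) (x i) = p2"
    and P3: "\<And>i j. i<j \<Longrightarrow> j<K \<Longrightarrow> adj G (b i) (x j) = p3"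
    and P4: "\<And>i j. i<j \<Longrightarrow> j<K \<Longrightarrow> adj G (b j) (x i) = p4"
    and P5: "\<And>i j. i<j \<Longrightarrow> j<K \<Longrightarrow> adj G (a i) (a j) = p5"
    and P6: "\<And>i j. i<j \<Longrightarrow> j<K \<Longrightarrow> adj G (b i) (b j) = p6"
  shows "forb G n"
proof -
  have K3: "3 \<le> K" "n \<le> K" "R + 3 \<le> K" using K by auto
  have matchy: "forb G n" if yx: "\<And>i. i<K \<Longrightarrow> adj G (x i) (y i)"
      and f: "\<And>i j. i<j \<Longrightarrow> j<K \<Longrightarrow> \<not> adj G (y i) (x j)"
      and bk: "\<And>i j. i<j \<Longrightarrow> j<K \<Longrightarrow> \<not> adj G (y j) (x i)"
      and yy: "\<And>i j. i<j \<Longrightarrow> j<K \<Longrightarrow> adj G (y i) (y j) = q" for y q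
  proof (rule match_core[OF wf K3(1,2) xx, where y=y and p=q])
    show "adj G (x i) (y j) \<longleftrightarrow> i = j" if "i<K" "j<K" for i j
    proof (cases "i = j")
      case True then show ?thesis using yx that by simp
    next
      case False
      show ?thesis
      proof (cases "i < j")
        case True then show ?thesis using bk[of i j] that adj_sym[of G "x i" "y j"] by simp
      next
        case False then have "j < i" using \<open>i \<noteq> j\<close> by simp
        then show ?thesis using f[of j i] that adj_sym[of G "x i" "y j"] by simp
      qed
    qed
    show "adj G (y i) (y j) = q" if "i<j" "j<K" for i j using yy that by simp
  qed
  show ?thesis
  proof (cases "p1 \<and> p2 \<and> p3 \<and> p4")
    case True
    show ?thesis
    proof (rule Rp[of "a 0" "b 0" "x ` {..<K}"])
      show "a 0 \<noteq> b 0" "\<not> adj G (a 0) (b 0)" using ab' ab K by auto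
      show "finite (x ` {..<K})" by simp
      have "inj_on x {..<K}" by (rule inj_from_adj[OF wf]) (use xx in auto)
      then show "R \<le> card (x ` {..<K})" using K by (simp add: card_image)
      fix c assume "c \<in> x ` {..<K}"
      then obtain l where l: "l < K" "c = x l" by auto
      show "adj G (a 0) c \<and> adj G (b 0) c"
      proof (cases "l = 0")
        case True then show ?thesis using xa[of 0] xb[of 0] l adj_sym[of G "x 0" "a 0"] adj_sym[of G "x 0" "b 0"] by simp
      next
        case False then show ?thesis using P1[of 0 l] P3[of 0 l] True l by simp
      qed
    qed
  next
    case notall: False
    show ?thesis
    proof (cases "\<not> p1 \<and> \<not> p2")
      case True
      show ?thesis by (rule matchy[of a p5]) (use xa P1 P2 P5 True in auto)
    next
      case nota: False
      show ?thesis
      proof (cases "\<not> p3 \<and> \<not> p4")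
        case True
        show ?thesis by (rule matchy[of b p6]) (use xb P3 P4 P6 True in auto)
      next
        case notb: False
        show ?thesis
        proof (cases "p1 = p2")
          case False
          show ?thesis
          proof (cases p1)
            case True
            then have "\<not> p2" using False by simp
            show ?thesis by (rule half_core[OF wf K3(3) Rp xx, where y=a]) (use xa P1 P2 True \<open>\<not> p2\<close> in auto)
          next
            case f1: False
            then have "p2" using False by simp
            show ?thesis by (rule half_core'[OF wf K3(3) Rp xx, where y=a]) (use xa P1 P2 f1 \<open>p2\<close> in auto)
          qed
        next
          case True
          then have "p1" "p2" using nota by auto
          then have "p3 \<noteq> p4" using notall notb by auto
          show ?thesis
          proof (cases p3)
            case True
            then have "\<not> p4" using \<open>p3 \<noteq> p4\<close> by simp
            show ?thesis by (rule half_core[OF wf K3(3) Rp xx, where y=b]) (use xb P3 P4 True \<open>\<not> p4\<close> in auto)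
          next
            case f3: False
            then have "p4" using \<open>p3 \<noteq> p4\<close> by simp
            show ?thesis by (rule half_core'[OF wf K3(3) Rp xx, where y=b]) (use xb P3 P4 f3 \<open>p4\<close> in auto)
          qed
        qed
      qed
    qed
  qed
qed

lemma star_core:
  assumes wf: "wf_graph G" and K: "R + n + 3 \<le> K"
    and Rp: "\<And>u w C. u \<noteq> w \<Longrightarrow> \<not> adj G u w \<Longrightarrow> finite C \<Longrightarrow> R \<le> card C \<Longrightarrow>
              (\<And>c. c \<in> C \<Longrightarrow> adj G u c \<and> adj G w c) \<Longrightarrow> forb G n"
    and zV: "z \<in> verts G"
    and zx: "\<And>i. i<K \<Longrightarrow> adj G z (x i)"
    and zy: "\<And>i. i<K \<Longrightarrow> \<not> adj G z (y i)"
    and zy': "\<And>i. i<K \<Longrightarrow> z \<noteq> y i"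
    and xy: "\<And>i. i<K \<Longrightarrow> adj G (x i) (y i)"
    and xx: "\<And>i j. i<K \<Longrightarrow> j<K \<Longrightarrow> \<not> adj G (x i) (x j)"
    and xinj: "inj_on x {..<K}"
    and Q1: "\<And>i j. i<j \<Longrightarrow> j<K \<Longrightarrow> adj G (y i) (x j) = q1"
    and Q2: "\<And>i j. i<j \<Longrightarrow> j<K \<Longrightarrow> adj G (y j) (x i) = q2"
    and Q3: "\<And>i j. i<j \<Longrightarrow> j<K \<Longrightarrow> adj G (y i) (y j) = q3"
  shows "forb G n"
proof -
  have cardx: "R \<le> card (x ` {..<K})" using xinj K by (simp add: card_image)
  show ?thesis
  proof (cases q1)
    case True
    show ?thesis
    proof (rule Rp[of z "y 0" "x ` {..<K}"])
      show "z \<noteq> y 0" "\<not> adj G z (y 0)" using zy zy' K by auto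
      fix c assume "c \<in> x ` {..<K}"
      then obtain l where l: "l < K" "c = x l" by auto
      show "adj G z c \<and> adj G (y 0) c"
      proof (cases "l = 0")
        case True then show ?thesis using zx[of 0] xy[of 0] l adj_sym[of G "x 0" "y 0"] by simp
      next
        case False then show ?thesis using zx[of l] Q1[of 0 l] \<open>q1\<close> l by simp
      qed
    qed (use cardx in auto)
  next
    case nq1: False
    show ?thesis
    proof (cases q2)
      case True
      show ?thesis
      proof (rule Rp[of z "y (K-1)" "x ` {..<K}"])
        show "z \<noteq> y (K-1)" "\<not> adj G z (y (K-1))" using zy zy' K by auto
        fix c assume "c \<in> x ` {..<K}"
        then obtain l where l: "l < K" "c = x l" by auto
        show "adj G z c \<and> adj G (y (K-1)) c"
        proof (cases "l = K-1")
          case True then show ?thesis using zx[of l] xy[of l] l adj_sym[of G "x l" "y l"] by simp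
        next
          case False then show ?thesis using zx[of l] Q2[of l "K-1"] \<open>q2\<close> l by simp
        qed
      qed (use cardx in auto)
    next
      case nq2: False
      have xy': "adj G (x i) (y j) \<longleftrightarrow> i = j" if "i<K" "j<K" for i j
      proof (cases "i = j")
        case True then show ?thesis using xy that by simp
      next
        case False
        show ?thesis
        proof (cases "i < j")
          case True then show ?thesis using Q2[of i j] nq2 that adj_sym[of G "x i" "y j"] by simp
        next
          case False then have "j < i" using \<open>i \<noteq> j\<close> by simp
          then show ?thesis using Q1[of j i] nq1 that adj_sym[of G "x i" "y j"] by simp
        qed
      qed
      have yy: "adj G (y i) (y j) = q3" if "i<K" "j<K" "i \<noteq> j" for i j
      proof (cases "i < j")
        case True then show ?thesis using Q3[of i j] that by simp
      next
        case False then have "j < i" using that by simp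
        then show ?thesis using Q3[of j i] that adj_sym[of G "y i" "y j"] by simp
      qed
      show ?thesis
      proof (cases q3)
        case True
        have "induced_sub (Kstar n) G"
        proof (rule Kstar_emb[OF wf, where c=y and p=x])
          show "adj G (y i) (y j)" if "i<n" "j<n" "i\<noteq>j" for i j using yy[of i j] that K True by simp
          show "adj G (y i) (x j) \<longleftrightarrow> i = j" if "i<n" "j<n" for i j
            using xy'[of j i] that K adj_sym[of G "y i" "x j"] by auto
          show "\<not> adj G (x i) (x j)" if "i<n" "j<n" for i j using xx that K by simp
        qed
        then show ?thesis unfolding forb_def by blast
      next
        case False
        have "induced_sub (K1nstar n) G"
        proof (rule K1nstar_emb[OF wf zV, where l=x and p=y])
          show "adj G z (x i)" "\<not> adj G z (y i)" "z \<noteq> y i" if "i<n" for i using zx zy zy' that K by auto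
          show "adj G (x i) (y j) \<longleftrightarrow> i = j" if "i<n" "j<n" for i j using xy'[of i j] that K by simp
          show "\<not> adj G (x i) (x j)" if "i<n" "j<n" for i j using xx that K by simp
          show "\<not> adj G (y i) (y j)" if "i<n" "j<n" for i j
          proof (cases "i = j")
            case True then show ?thesis using adj_irrefl[OF wf, of "y i"] by simp
          next
            case False then show ?thesis using yy[of i j] that K \<open>\<not> q3\<close> by simp
          qed
        qed
        then show ?thesis unfolding forb_def by blast
      qed
    qed
  qed
qed


lemma hub_core:
  assumes wf: "wf_graph G" and K: "R + n + 3 \<le> K"
    and Rp: "\<And>u w C. u \<noteq> w \<Longrightarrow> \<not> adj G u w \<Longrightarrow> finite C \<Longrightarrow> R \<le> card C \<Longrightarrow>
              (\<And>c. c \<in> C \<Longrightarrow> adj G u c \<and> adj G w c) \<Longrightarrow> forb G n"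
    and xx: "\<And>i j. i<K \<Longrightarrow> j<K \<Longrightarrow> \<not> adj G (x i) (x j)"
    and xinj: "inj_on x {..<K}"
    and xy: "\<And>i. i<K \<Longrightarrow> adj G (x i) (y i)"
    and yinj: "inj_on y {..<K}"
    and F1: "\<And>i j. i<j \<Longrightarrow> j<K \<Longrightarrow> adj G (y i) (x j) = q1"
    and F2: "\<And>i j. i<j \<Longrightarrow> j<K \<Longrightarrow> adj G (y j) (x i) = q2"
    and q: "q1 \<or> q2"
  shows "forb G n"
proof (cases q1)
  case True
  show ?thesis
  proof (rule Rp[of "x (K-2)" "x (K-1)" "y ` {..<K-1}"])
    show "x (K-2) \<noteq> x (K-1)" using inj_onD[OF xinj, of "K-2" "K-1"] K by auto
    show "\<not> adj G (x (K-2)) (x (K-1))" using xx K by simp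
    show "finite (y ` {..<K-1})" by simp
    have "inj_on y {..<K-1}" using yinj by (rule inj_on_subset) auto
    then show "R \<le> card (y ` {..<K-1})" using K by (simp add: card_image)
    fix c assume "c \<in> y ` {..<K-1}"
    then obtain l where l: "l < K-1" "c = y l" by auto
    show "adj G (x (K-2)) c \<and> adj G (x (K-1)) c"
    proof
      show "adj G (x (K-2)) c"
      proof (cases "l = K-2")
        case True then show ?thesis using xy[of l] l K by simp
      next
        case False then show ?thesis using F1[of l "K-2"] l K True adj_sym[of G "x (K-2)" "y l"] by simp
      qed
      show "adj G (x (K-1)) c" using F1[of l "K-1"] l K True adj_sym[of G "x (K-1)" "y l"] by simp
    qed
  qed
next
  case False
  then have "q2" using q by simp
  show ?thesis
  proof (rule Rp[of "x 0" "x 1" "y ` {1..<K}"])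
    show "x 0 \<noteq> x 1" using inj_onD[OF xinj, of 0 1] K by auto
    show "\<not> adj G (x 0) (x 1)" using xx K by simp
    show "finite (y ` {1..<K})" by simp
    have "inj_on y {1..<K}" using yinj by (rule inj_on_subset) auto
    then show "R \<le> card (y ` {1..<K})" using K by (simp add: card_image)
    fix c assume "c \<in> y ` {1..<K}"
    then obtain l where l: "1 \<le> l" "l < K" "c = y l" by auto
    show "adj G (x 0) c \<and> adj G (x 1) c"
    proof
      show "adj G (x 0) c" using F2[of 0 l] l \<open>q2\<close> adj_sym[of G "x 0" "y l"] by simp
      show "adj G (x 1) c"
      proof (cases "l = 1")
        case True then show ?thesis using xy[of l] l K by simp
      next
        case False then show ?thesis using F2[of 1 l] l \<open>q2\<close> adj_sym[of G "x 1" "y l"] by simp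
      qed
    qed
  qed
qed

lemma ind_core:
  assumes wf: "wf_graph G" and K: "R + n + 3 \<le> K"
    and Rp: "\<And>u w C. u \<noteq> w \<Longrightarrow> \<not> adj G u w \<Longrightarrow> finite C \<Longrightarrow> R \<le> card C \<Longrightarrow>
              (\<And>c. c \<in> C \<Longrightarrow> adj G u c \<and> adj G w c) \<Longrightarrow> forb G n"
    and xx: "\<And>i j. i<K \<Longrightarrow> j<K \<Longrightarrow> \<not> adj G (x i) (x j)"
    and xinj: "inj_on x {..<K}"
    and xa: "\<And>i. i<K \<Longrightarrow> adj G (x i) (a i)"
    and xb: "\<And>i. i<K \<Longrightarrow> adj G (x i) (b i)"
    and ab: "\<And>i. i<K \<Longrightarrow> \<not> adj G (a i) (b i)"
    and ab': "\<And>i. i<K \<Longrightarrow> a i \<noteq> b i"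
    and E1: "\<And>i j. i<j \<Longrightarrow> j<K \<Longrightarrow> (a i = a j) = e1"
    and E2: "\<And>i j. i<j \<Longrightarrow> j<K \<Longrightarrow> (b i = b j) = e2"
    and E3: "\<And>i j. i<j \<Longrightarrow> j<K \<Longrightarrow> (a i = b j) = e3"
    and E4: "\<And>i j. i<j \<Longrightarrow> j<K \<Longrightarrow> (b i = a j) = e4"
    and F1: "\<And>i j. i<j \<Longrightarrow> j<K \<Longrightarrow> adj G (a i) (x j) = f1"
    and F2: "\<And>i j. i<j \<Longrightarrow> j<K \<Longrightarrow> adj G (a j) (x i) = f2"
    and F3: "\<And>i j. i<j \<Longrightarrow> j<K \<Longrightarrow> adj G (b i) (x j) = f3"
    and F4: "\<And>i j. i<j \<Longrightarrow> j<K \<Longrightarrow> adj G (b j) (x i) = f4"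
    and G1: "\<And>i j. i<j \<Longrightarrow> j<K \<Longrightarrow> adj G (a i) (a j) = g1"
    and G2: "\<And>i j. i<j \<Longrightarrow> j<K \<Longrightarrow> adj G (b i) (b j) = g2"
    and G3: "\<And>i j. i<j \<Longrightarrow> j<K \<Longrightarrow> adj G (a i) (b j) = g3"
    and G4: "\<And>i j. i<j \<Longrightarrow> j<K \<Longrightarrow> adj G (b i) (a j) = g4"
  shows "forb G n"
proof -
  have K3: "3 \<le> K" "n + 1 \<le> K" using K by auto
  have ne3: "\<not> e3"
  proof
    assume e3
    then have "a 0 = b 1" "a 0 = b 2" "a 1 = b 2" using E3[of 0 1] E3[of 0 2] E3[of 1 2] K3 by auto
    then have "a 1 = b 1" by simp
    then show False using ab'[of 1] K3 by simp
  qed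
  have ne4: "\<not> e4"
  proof
    assume e4
    then have "b 0 = a 1" "b 0 = a 2" "b 1 = a 2" using E4[of 0 1] E4[of 0 2] E4[of 1 2] K3 by auto
    then have "a 1 = b 1" by simp
    then show False using ab'[of 1] K3 by simp
  qed
  have aV: "a i \<in> verts G" "b i \<in> verts G" if "i < K" for i
    using adj_wf(2)[OF wf xa[OF that]] adj_wf(2)[OF wf xb[OF that]] by auto
  show ?thesis
  proof (cases e1)
    case e1: True
    have a0: "a i = a 0" if "i < K" for i
    proof (cases "i = 0")
      case False then show ?thesis using E1[of 0 i] e1 that by simp
    qed simp
    show ?thesis
    proof (cases e2)
      case e2: True
      have b0: "b i = b 0" if "i < K" for i
      proof (cases "i = 0")
        case False then show ?thesis using E2[of 0 i] e2 that by simp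
      qed simp
      show ?thesis
      proof (rule Rp[of "a 0" "b 0" "x ` {..<K}"])
        show "a 0 \<noteq> b 0" "\<not> adj G (a 0) (b 0)" using ab' ab K by auto
        show "finite (x ` {..<K})" by simp
        show "R \<le> card (x ` {..<K})" using xinj K by (simp add: card_image)
        fix c assume "c \<in> x ` {..<K}"
        then obtain l where l: "l < K" "c = x l" by auto
        show "adj G (a 0) c \<and> adj G (b 0) c"
          using xa[of l] xb[of l] a0[of l] b0[of l] l adj_sym[of G "x l" "a l"] adj_sym[of G "x l" "b l"] by simp
      qed
    next
      case ne2: False
      show ?thesis
      proof (rule star_core[OF wf K Rp aV(1), where x=x and y=b])
        show "0 < K" using K by simp
        show "adj G (a 0) (x i)" if "i < K" for i using xa[OF that] a0[OF that] adj_sym[of G "x i" "a i"] by simp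
        show "\<not> adj G (a 0) (b i)" if "i < K" for i using ab[OF that] a0[OF that] by simp
        show "a 0 \<noteq> b i" if "i < K" for i using ab'[OF that] a0[OF that] by simp
      qed (use xb xx xinj F3 F4 G2 in auto)
    qed
  next
    case ne1: False
    show ?thesis
    proof (cases e2)
      case e2: True
      have b0: "b i = b 0" if "i < K" for i
      proof (cases "i = 0")
        case False then show ?thesis using E2[of 0 i] e2 that by simp
      qed simp
      show ?thesis
      proof (rule star_core[OF wf K Rp aV(2), where x=x and y=a])
        show "0 < K" using K by simp
        show "adj G (b 0) (x i)" if "i < K" for i using xb[OF that] b0[OF that] adj_sym[of G "x i" "b i"] by simp
        show "\<not> adj G (b 0) (a i)" if "i < K" for i using ab[OF that] b0[OF that] adj_sym[of G "a i" "b i"] by simp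
        show "b 0 \<noteq> a i" if "i < K" for i using ab'[OF that] b0[OF that] by simp
      qed (use xa xx xinj F1 F2 G1 in auto)
    next
      case ne2: False
      have ainj: "inj_on a {..<K}"
      proof (rule inj_onI)
        fix i j assume "i \<in> {..<K}" "j \<in> {..<K}" "a i = a j"
        then show "i = j" using E1[of i j] E1[of j i] ne1 by (cases "i < j"; cases "j < i") auto
      qed
      have binj: "inj_on b {..<K}"
      proof (rule inj_onI)
        fix i j assume "i \<in> {..<K}" "j \<in> {..<K}" "b i = b j"
        then show "i = j" using E2[of i j] E2[of j i] ne2 by (cases "i < j"; cases "j < i") auto
      qed
      show ?thesis
      proof (cases "f1 \<or> f2")
        case True
        show ?thesis by (rule hub_core[OF wf K Rp xx xinj xa ainj F1 F2 True])
      next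
        case nf12: False
        show ?thesis
        proof (cases "f3 \<or> f4")
          case True
          show ?thesis by (rule hub_core[OF wf K Rp xx xinj xb binj F3 F4 True])
        next
          case nf34: False
          have c_ax: "\<not> adj G (a i) (x j)" if "i<K" "j<K" "i\<noteq>j" for i j
            using F1[of i j] F2[of j i] nf12 that by (cases "i < j") auto
          have c_bx: "\<not> adj G (b i) (x j)" if "i<K" "j<K" "i\<noteq>j" for i j
            using F3[of i j] F4[of j i] nf34 that by (cases "i < j") auto
          have xa': "adj G (a i) (x j) \<longleftrightarrow> i = j" if "i<K" "j<K" for i j
            using c_ax[OF that] xa[of i] that adj_sym[of G "x i" "a i"] by (cases "i = j") auto
          have xb': "adj G (b i) (x j) \<longleftrightarrow> i = j" if "i<K" "j<K" for i j
            using c_bx[OF that] xb[of i] that adj_sym[of G "x i" "b i"] by (cases "i = j") auto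
          show ?thesis
          proof (cases g1)
            case True
            have "induced_sub (Kstar n) G"
            proof (rule Kstar_emb[OF wf, where c=a and p=x])
              show "adj G (a i) (a j)" if "i<n" "j<n" "i\<noteq>j" for i j
                using G1[of i j] G1[of j i] True that K adj_sym[of G "a i" "a j"] by (cases "i < j") auto
              show "adj G (a i) (x j) \<longleftrightarrow> i = j" if "i<n" "j<n" for i j using xa'[of i j] that K by simp
              show "\<not> adj G (x i) (x j)" if "i<n" "j<n" for i j using xx that K by simp
            qed
            then show ?thesis unfolding forb_def by blast
          next
            case ng1: False
            show ?thesis
            proof (cases g2)
              case True
              have "induced_sub (Kstar n) G"
              proof (rule Kstar_emb[OF wf, where c=b and p=x])
                show "adj G (b i) (b j)" if "i<n" "j<n" "i\<noteq>j" for i j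
                  using G2[of i j] G2[of j i] True that K adj_sym[of G "b i" "b j"] by (cases "i < j") auto
                show "adj G (b i) (x j) \<longleftrightarrow> i = j" if "i<n" "j<n" for i j using xb'[of i j] that K by simp
                show "\<not> adj G (x i) (x j)" if "i<n" "j<n" for i j using xx that K by simp
              qed
              then show ?thesis unfolding forb_def by blast
            next
              case ng2: False
              have c_aa: "\<not> adj G (a i) (a j)" if "i<K" "j<K" for i j
              proof (cases "i = j")
                case True then show ?thesis using adj_irrefl[OF wf, of "a i"] by simp
              next
                case False then show ?thesis
                  using G1[of i j] G1[of j i] ng1 that adj_sym[of G "a i" "a j"] by (cases "i < j") auto
              qed
              have c_bb: "\<not> adj G (b i) (b j)" if "i<K" "j<K" for i j
              proof (cases "i = j")
                case True then show ?thesis using adj_irrefl[OF wf, of "b i"] by simp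
              next
                case False then show ?thesis
                  using G2[of i j] G2[of j i] ng2 that adj_sym[of G "b i" "b j"] by (cases "i < j") auto
              qed
              have a0x: "a 0 \<noteq> x i" "b 0 \<noteq> x i" if "0 < i" "i < K" for i
              proof -
                have "\<not> adj G (x 0) (x i)" using xx that by simp
                then show "a 0 \<noteq> x i" "b 0 \<noteq> x i" using xa[of 0] xb[of 0] that by auto
              qed
              show ?thesis
              proof (cases g3)
                case True
                have "induced_sub (K1nstar n) G"
                proof (rule K1nstar_emb[OF wf aV(1), where l="\<lambda>i. b (i+1)" and p="\<lambda>i. x (i+1)"])
                  show "0 < K" using K by simp
                  show "adj G (a 0) (b (i+1))" if "i<n" for i using G3[of 0 "i+1"] True that K by simp
                  show "\<not> adj G (a 0) (x (i+1))" if "i<n" for i using xa'[of 0 "i+1"] that K by simp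
                  show "a 0 \<noteq> x (i+1)" if "i<n" for i using a0x[of "i+1"] that K by simp
                  show "adj G (b (i+1)) (x (j+1)) \<longleftrightarrow> i = j" if "i<n" "j<n" for i j
                    using xb'[of "i+1" "j+1"] that K by simp
                  show "\<not> adj G (b (i+1)) (b (j+1))" if "i<n" "j<n" for i j using c_bb that K by simp
                  show "\<not> adj G (x (i+1)) (x (j+1))" if "i<n" "j<n" for i j using xx that K by simp
                qed
                then show ?thesis unfolding forb_def by blast
              next
                case ng3: False
                show ?thesis
                proof (cases g4)
                  case True
                  have "induced_sub (K1nstar n) G"
                  proof (rule K1nstar_emb[OF wf aV(2), where l="\<lambda>i. a (i+1)" and p="\<lambda>i. x (i+1)"])
                    show "0 < K" using K by simp
                    show "adj G (b 0) (a (i+1))" if "i<n" for i using G4[of 0 "i+1"] True that K by simp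
                    show "\<not> adj G (b 0) (x (i+1))" if "i<n" for i using xb'[of 0 "i+1"] that K by simp
                    show "b 0 \<noteq> x (i+1)" if "i<n" for i using a0x[of "i+1"] that K by simp
                    show "adj G (a (i+1)) (x (j+1)) \<longleftrightarrow> i = j" if "i<n" "j<n" for i j
                      using xa'[of "i+1" "j+1"] that K by simp
                    show "\<not> adj G (a (i+1)) (a (j+1))" if "i<n" "j<n" for i j using c_aa that K by simp
                    show "\<not> adj G (x (i+1)) (x (j+1))" if "i<n" "j<n" for i j using xx that K by simp
                  qed
                  then show ?thesis unfolding forb_def by blast
                next
                  case ng4: False
                  have c_ab: "\<not> adj G (a i) (b j)" if "i<K" "j<K" for i j
                  proof (cases "i = j")
                    case True then show ?thesis using ab that by simp
                  next
                    case False then show ?thesis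
                      using G3[of i j] G4[of j i] ng3 ng4 that adj_sym[of G "b j" "a i"] by (cases "i < j") auto
                  qed
                  define T where "T i r = (if r = (0::nat) then a i else if r = 1 then x i else b i)" for i r
                  have "induced_sub (nP3 n) G"
                  proof (rule nP3_emb[OF wf, where T=T])
                    show "T i 0 \<noteq> T i 2" if "i < n" for i using ab' that K unfolding T_def by simp
                    fix i j r s assume ij: "i<n" "j<n" "r<(3::nat)" "s<(3::nat)"
                    then have ijK: "i < K" "j < K" using K by auto
                    have rr: "r = 0 \<or> r = 1 \<or> r = 2" "s = 0 \<or> s = 1 \<or> s = 2" using ij by auto
                    have x1: "adj G (x i) (x j) \<longleftrightarrow> False" using xx ijK by simp
                    have x2: "adj G (a i) (a j) \<longleftrightarrow> False" "adj G (b i) (b j) \<longleftrightarrow> False"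
                      "adj G (a i) (b j) \<longleftrightarrow> False" "adj G (b i) (a j) \<longleftrightarrow> False"
                      using c_aa c_bb c_ab[of i j] c_ab[of j i] ijK adj_sym[of G "b i" "a j"] by auto
                    have x3: "adj G (a i) (x j) \<longleftrightarrow> i = j" "adj G (b i) (x j) \<longleftrightarrow> i = j"
                      "adj G (x i) (a j) \<longleftrightarrow> i = j" "adj G (x i) (b j) \<longleftrightarrow> i = j"
                      using xa'[of i j] xb'[of i j] xa'[of j i] xb'[of j i] ijK
                        adj_sym[of G "x i" "a j"] adj_sym[of G "x i" "b j"] by auto
                    show "adj G (T i r) (T j s) \<longleftrightarrow> i = j \<and> (r = 1 \<and> s \<noteq> 1 \<or> s = 1 \<and> r \<noteq> 1)"
                      using rr unfolding T_def by (elim disjE) (simp_all add: x1 x2 x3)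
                  qed
                  then show ?thesis unfolding forb_def by blast
                qed
              qed
            qed
          qed
        qed
      qed
    qed
  qed
qed


lemma Rp_from:
  assumes "\<forall>G u w C. wf_graph G \<and> u \<noteq> w \<and> \<not> adj G u w \<and> finite C \<and> R \<le> card C \<and>
     (\<forall>c\<in>C. adj G u c \<and> adj G w c) \<longrightarrow> forb G n" "wf_graph G"
  shows "\<And>u w C. u \<noteq> w \<Longrightarrow> \<not> adj G u w \<Longrightarrow> finite C \<Longrightarrow> R \<le> card C \<Longrightarrow>
              (\<And>c. c \<in> C \<Longrightarrow> adj G u c \<and> adj G w c) \<Longrightarrow> forb G n"
proof -
  fix u w C assume h: "u \<noteq> w" "\<not> adj G u w" "finite C" "R \<le> card C" "\<And>c. c \<in> C \<Longrightarrow> adj G u c \<and> adj G w c"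
  then have "\<forall>c\<in>C. adj G u c \<and> adj G w c" by blast
  then show "forb G n" using assms(1)[rule_format, of G u w C] assms(2) h(1-4) by blast
qed

lemma choose_pairs:
  assumes "\<forall>u\<in>Q. \<exists>a b. adj G u a \<and> adj G u b \<and> a \<noteq> b \<and> \<not> adj G a b"
  obtains A B where "\<And>u. u \<in> Q \<Longrightarrow> adj G u (A u) \<and> adj G u (B u) \<and> A u \<noteq> B u \<and> \<not> adj G (A u) (B u)"
proof -
  have "\<forall>u\<in>Q. \<exists>p. adj G u (fst p) \<and> adj G u (snd p) \<and> fst p \<noteq> snd p \<and> \<not> adj G (fst p) (snd p)"
  proof
    fix u assume "u \<in> Q"
    then obtain a b where "adj G u a \<and> adj G u b \<and> a \<noteq> b \<and> \<not> adj G a b" using assms by blast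
    then show "\<exists>p. adj G u (fst p) \<and> adj G u (snd p) \<and> fst p \<noteq> snd p \<and> \<not> adj G (fst p) (snd p)"
      by (intro exI[of _ "(a, b)"]) simp
  qed
  from bchoice[OF this] obtain f where f: "\<forall>u\<in>Q. adj G u (fst (f u)) \<and> adj G u (snd (f u)) \<and> fst (f u) \<noteq> snd (f u) \<and> \<not> adj G (fst (f u)) (snd (f u))"
    by (elim exE)
  show ?thesis
  proof (rule that[of "\<lambda>u. fst (f u)" "\<lambda>u. snd (f u)"])
    fix u assume "u \<in> Q"
    then show "adj G u (fst (f u)) \<and> adj G u (snd (f u)) \<and> fst (f u) \<noteq> snd (f u) \<and> \<not> adj G (fst (f u)) (snd (f u))"
      using f by blast
  qed
qed

lemma enum_sub:
  fixes g q :: "nat \<Rightarrow> nat" and K N :: nat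
  assumes q: "bij_betw q {0..<card Q} Q" and NQ: "N \<le> card Q"
    and g1: "\<forall>i<K. g i < N" and g2: "\<forall>i j. i<j \<longrightarrow> j<K \<longrightarrow> g i < g j"
  shows "\<And>i. i < K \<Longrightarrow> q (g i) \<in> Q" "inj_on (\<lambda>i. q (g i)) {..<K}"
proof -
  show "q (g i) \<in> Q" if "i < K" for i
  proof -
    have "g i < card Q" using g1 that NQ by force
    then show ?thesis using q unfolding bij_betw_def by auto
  qed
  show "inj_on (\<lambda>i. q (g i)) {..<K}"
  proof (rule inj_onI)
    fix i j assume ij: "i \<in> {..<K}" "j \<in> {..<K}" "q (g i) = q (g j)"
    have "g i < card Q" "g j < card Q" using g1 ij NQ by force+
    then have "g i = g j" using ij(3) q unfolding bij_betw_def inj_on_def by auto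
    show "i = j"
    proof (rule ccontr)
      assume "i \<noteq> j"
      then have "i < j \<or> j < i" by arith
      then have "g i < g j \<or> g j < g i" using g2 ij(1,2) by auto
      then show False using \<open>g i = g j\<close> by simp
    qed
  qed
qed

lemma clique_case:
  fixes n :: nat
  shows "\<exists>N. \<forall>G Q. wf_graph G \<and> finite Q \<and> N \<le> card Q \<and> (\<forall>u\<in>Q. \<forall>w\<in>Q. u \<noteq> w \<longrightarrow> adj G u w) \<and>
     (\<forall>u\<in>Q. \<exists>a b. adj G u a \<and> adj G u b \<and> a \<noteq> b \<and> \<not> adj G a b) \<longrightarrow> forb G n"
proof -
  obtain R where R: "\<forall>G u w C. wf_graph G \<and> u \<noteq> w \<and> \<not> adj G u w \<and> finite C \<and> R \<le> card C \<and>
     (\<forall>c\<in>C. adj G u c \<and> adj G w c) \<longrightarrow> forb G n" using common_ex[of n] by blast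
  define K where "K = R + n + 3"
  obtain N where N: "\<forall>col :: nat \<Rightarrow> nat \<Rightarrow> bool \<times> bool \<times> bool \<times> bool \<times> bool \<times> bool. \<exists>g. (\<forall>i<K. g i < N) \<and> (\<forall>i j. i<j \<longrightarrow> j<K \<longrightarrow> g i < g j) \<and>
     (\<forall>i j i' j'. i<j \<longrightarrow> j<K \<longrightarrow> i'<j' \<longrightarrow> j'<K \<longrightarrow> col (g i) (g j) = col (g i') (g j'))"
    using ordered_ramsey[of K, where 'c = "bool \<times> bool \<times> bool \<times> bool \<times> bool \<times> bool"] by blast
  have "forb G n" if as: "wf_graph G" "finite Q" "N \<le> card Q" "\<forall>u\<in>Q. \<forall>w\<in>Q. u \<noteq> w \<longrightarrow> adj G u w"
     "\<forall>u\<in>Q. \<exists>a b. adj G u a \<and> adj G u b \<and> a \<noteq> b \<and> \<not> adj G a b" for G Q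
  proof -
    obtain A B where AB: "\<And>u. u \<in> Q \<Longrightarrow> adj G u (A u) \<and> adj G u (B u) \<and> A u \<noteq> B u \<and> \<not> adj G (A u) (B u)"
      using choose_pairs[OF as(5)] by blast
    obtain q where q: "bij_betw q {0..<card Q} Q" using ex_bij_betw_nat_finite[OF as(2)] by blast
    define col where "col i j = (adj G (A (q i)) (q j), adj G (A (q j)) (q i), adj G (B (q i)) (q j),
       adj G (B (q j)) (q i), adj G (A (q i)) (A (q j)), adj G (B (q i)) (B (q j)))" for i j
    obtain g where g1: "\<forall>i<K. g i < N" and g2: "\<forall>i j. i<j \<longrightarrow> j<K \<longrightarrow> g i < g j"
      and g3: "\<forall>i j i' j'. i<j \<longrightarrow> j<K \<longrightarrow> i'<j' \<longrightarrow> j'<K \<longrightarrow> col (g i) (g j) = col (g i') (g j')"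
      using spec[OF N, of col] by blast
    note qQ = enum_sub(1)[OF q as(3) g1 g2] and qi = enum_sub(2)[OF q as(3) g1 g2]
    define x where "x i = q (g i)" for i
    define a where "a i = A (x i)" for i
    define b where "b i = B (x i)" for i
    define col' where "col' i j = (adj G (a i) (x j), adj G (a j) (x i), adj G (b i) (x j),
       adj G (b j) (x i), adj G (a i) (a j), adj G (b i) (b j))" for i j
    have cc: "col' i j = col' 0 1" if "i < j" "j < K" for i j
    proof -
      have "col' i j = col (g i) (g j)" "col' 0 1 = col (g 0) (g 1)" unfolding col'_def col_def a_def b_def x_def by simp_all
      moreover have "col (g i) (g j) = col (g 0) (g 1)" using g3[rule_format, of i j 0 1] that unfolding K_def by simp
      ultimately show ?thesis by simp
    qed
    have xQ: "i < K \<Longrightarrow> x i \<in> Q" for i unfolding x_def using qQ by blast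
    show "forb G n"
    proof (rule clique_core[OF as(1) _ Rp_from[OF R as(1)], where K=K and x=x and a=a and b=b])
      show "R + n + 3 \<le> K" unfolding K_def by simp
      show "adj G (x i) (x j)" if "i<K" "j<K" "i\<noteq>j" for i j
      proof -
        have "x i \<noteq> x j" using inj_onD[OF qi, of i j] that unfolding x_def by auto
        then show ?thesis using as(4) xQ[OF that(1)] xQ[OF that(2)] by blast
      qed
      show "adj G (x i) (a i)" "adj G (x i) (b i)" "\<not> adj G (a i) (b i)" "a i \<noteq> b i" if "i < K" for i
        using AB[OF xQ[OF that]] unfolding a_def b_def by auto
      show "adj G (a i) (x j) = adj G (a 0) (x 1)" "adj G (a j) (x i) = adj G (a 1) (x 0)"
           "adj G (b i) (x j) = adj G (b 0) (x 1)" "adj G (b j) (x i) = adj G (b 1) (x 0)"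
           "adj G (a i) (a j) = adj G (a 0) (a 1)" "adj G (b i) (b j) = adj G (b 0) (b 1)"
        if "i < j" "j < K" for i j using cc[OF that] unfolding col'_def by simp_all
    qed
  qed
  then show ?thesis by blast
qed

lemma ind_case:
  fixes n :: nat
  shows "\<exists>N. \<forall>G Q. wf_graph G \<and> finite Q \<and> N \<le> card Q \<and> (\<forall>u\<in>Q. \<forall>w\<in>Q. \<not> adj G u w) \<and>
     (\<forall>u\<in>Q. \<exists>a b. adj G u a \<and> adj G u b \<and> a \<noteq> b \<and> \<not> adj G a b) \<longrightarrow> forb G n"
proof -
  obtain R where R: "\<forall>G u w C. wf_graph G \<and> u \<noteq> w \<and> \<not> adj G u w \<and> finite C \<and> R \<le> card C \<and>
     (\<forall>c\<in>C. adj G u c \<and> adj G w c) \<longrightarrow> forb G n" using common_ex[of n] by blast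
  define K where "K = R + n + 3"
  obtain N where N: "\<forall>col :: nat \<Rightarrow> nat \<Rightarrow> (bool \<times> bool \<times> bool \<times> bool) \<times> (bool \<times> bool \<times> bool \<times> bool) \<times> (bool \<times> bool \<times> bool \<times> bool).
     \<exists>g. (\<forall>i<K. g i < N) \<and> (\<forall>i j. i<j \<longrightarrow> j<K \<longrightarrow> g i < g j) \<and>
     (\<forall>i j i' j'. i<j \<longrightarrow> j<K \<longrightarrow> i'<j' \<longrightarrow> j'<K \<longrightarrow> col (g i) (g j) = col (g i') (g j'))"
    using ordered_ramsey[of K, where 'c = "(bool \<times> bool \<times> bool \<times> bool) \<times> (bool \<times> bool \<times> bool \<times> bool) \<times> (bool \<times> bool \<times> bool \<times> bool)"]
    by blast
  have "forb G n" if as: "wf_graph G" "finite Q" "N \<le> card Q" "\<forall>u\<in>Q. \<forall>w\<in>Q. \<not> adj G u w"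
     "\<forall>u\<in>Q. \<exists>a b. adj G u a \<and> adj G u b \<and> a \<noteq> b \<and> \<not> adj G a b" for G Q
  proof -
    obtain A B where AB: "\<And>u. u \<in> Q \<Longrightarrow> adj G u (A u) \<and> adj G u (B u) \<and> A u \<noteq> B u \<and> \<not> adj G (A u) (B u)"
      using choose_pairs[OF as(5)] by blast
    define col where "col q i j = ((A (q i) = A (q j), B (q i) = B (q j), A (q i) = B (q j), B (q i) = A (q j)),
       (adj G (A (q i)) (q j), adj G (A (q j)) (q i), adj G (B (q i)) (q j), adj G (B (q j)) (q i)),
       (adj G (A (q i)) (A (q j)), adj G (B (q i)) (B (q j)), adj G (A (q i)) (B (q j)), adj G (B (q i)) (A (q j))))"
      for q :: "nat \<Rightarrow> nat" and i j
    obtain q0 where q0: "bij_betw q0 {0..<card Q} Q" using ex_bij_betw_nat_finite[OF as(2)] by blast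
    obtain g where g1: "\<forall>i<K. g i < N" and g2: "\<forall>i j. i<j \<longrightarrow> j<K \<longrightarrow> g i < g j"
      and g3: "\<forall>i j i' j'. i<j \<longrightarrow> j<K \<longrightarrow> i'<j' \<longrightarrow> j'<K \<longrightarrow> col q0 (g i) (g j) = col q0 (g i') (g j')"
      using spec[OF N, of "col q0"] by blast
    note qQ = enum_sub(1)[OF q0 as(3) g1 g2] and qi = enum_sub(2)[OF q0 as(3) g1 g2]
    define x where "x i = q0 (g i)" for i
    define a where "a i = A (x i)" for i
    define b where "b i = B (x i)" for i
    have cc: "col q0 (g i) (g j) = col q0 (g 0) (g 1)" if "i < j" "j < K" for i j
      using g3[rule_format, of i j 0 1] that unfolding K_def by simp
    have xQ: "i < K \<Longrightarrow> x i \<in> Q" for i unfolding x_def using qQ by blast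
    show "forb G n"
    proof (rule ind_core[OF as(1) _ Rp_from[OF R as(1)], where K=K and x=x and a=a and b=b])
      show "R + n + 3 \<le> K" unfolding K_def by simp
      show "\<not> adj G (x i) (x j)" if "i<K" "j<K" for i j using as(4) xQ[OF that(1)] xQ[OF that(2)] by blast
      show "inj_on x {..<K}" using qi unfolding x_def by simp
      show "adj G (x i) (a i)" "adj G (x i) (b i)" "\<not> adj G (a i) (b i)" "a i \<noteq> b i" if "i < K" for i
        using AB[OF xQ[OF that]] unfolding a_def b_def by auto
      show "(a i = a j) = (a 0 = a 1)" "(b i = b j) = (b 0 = b 1)" "(a i = b j) = (a 0 = b 1)" "(b i = a j) = (b 0 = a 1)"
           "adj G (a i) (x j) = adj G (a 0) (x 1)" "adj G (a j) (x i) = adj G (a 1) (x 0)"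
           "adj G (b i) (x j) = adj G (b 0) (x 1)" "adj G (b j) (x i) = adj G (b 1) (x 0)"
           "adj G (a i) (a j) = adj G (a 0) (a 1)" "adj G (b i) (b j) = adj G (b 0) (b 1)"
           "adj G (a i) (b j) = adj G (a 0) (b 1)" "adj G (b i) (a j) = adj G (b 0) (a 1)"
        if "i < j" "j < K" for i j using cc[OF that] unfolding col_def a_def b_def x_def by simp_all
    qed
  qed
  then show ?thesis by blast
qed


lemma ex_pair: "P u v \<Longrightarrow> \<exists>a b. {u,v} = {a,b} \<and> P a b"
  by blast

lemma wf_Kstar: "wf_graph (Kstar n)"
  unfolding wf_graph_def Kstar_def verts_def edges_def by (auto intro!: ex_pair)
lemma wf_CK: "wf_graph (CK n)"
  unfolding wf_graph_def CK_def verts_def edges_def by (auto intro!: ex_pair)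
lemma wf_nP3: "wf_graph (nP3 n)"
  unfolding wf_graph_def nP3_def verts_def edges_def by (auto intro!: ex_pair)
lemma wf_K1nstar: "wf_graph (K1nstar n)"
  unfolding wf_graph_def K1nstar_def verts_def edges_def by (auto intro!: ex_pair)
lemma wf_K2n: "wf_graph (K2n n)"
  unfolding wf_graph_def K2n_def verts_def edges_def by (auto intro!: ex_pair)
lemma wf_E2K: "wf_graph (E2K n)"
  unfolding wf_graph_def E2K_def verts_def edges_def by (auto intro!: ex_pair)

lemma bad_count:
  assumes wf: "wf_graph F" and inj: "inj_on h {..<n}"
    and hv: "\<And>i. i<n \<Longrightarrow> h i \<in> verts F"
    and bad: "\<And>i. i<n \<Longrightarrow> \<exists>a b. adj F (h i) a \<and> adj F (h i) b \<and> a \<noteq> b \<and> \<not> adj F a b"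
  shows "n \<le> card {v \<in> verts F. alpha (induced F (nbhd F v)) \<ge> 2}"
proof -
  have sub: "h ` {..<n} \<subseteq> {v \<in> verts F. alpha (induced F (nbhd F v)) \<ge> 2}"
  proof
    fix v assume "v \<in> h ` {..<n}"
    then obtain i where i: "i < n" "v = h i" by auto
    show "v \<in> {v \<in> verts F. alpha (induced F (nbhd F v)) \<ge> 2}"
      using hv[OF i(1)] bad[OF i(1)] alpha_ge2_iff[OF wf, of v] i(2) by simp
  qed
  have fin: "finite {v \<in> verts F. alpha (induced F (nbhd F v)) \<ge> 2}"
    using wf unfolding wf_graph_def by simp
  have "card (h ` {..<n}) = n" using inj by (simp add: card_image)
  then show ?thesis using card_mono[OF fin sub] by simp
qed

lemma bad_Kstar: "2 \<le> n \<Longrightarrow> n \<le> card {v \<in> verts (Kstar n). alpha (induced (Kstar n) (nbhd (Kstar n) v)) \<ge> 2}"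
proof (rule bad_count[OF wf_Kstar, where h="\<lambda>i. i"])
  assume n: "2 \<le> n"
  show "inj_on (\<lambda>i. i) {..<n}" by simp
  show "i \<in> verts (Kstar n)" if "i < n" for i using that by (simp add: Kstar_def verts_def)
  show "\<exists>a b. adj (Kstar n) i a \<and> adj (Kstar n) i b \<and> a \<noteq> b \<and> \<not> adj (Kstar n) a b" if "i < n" for i
  proof (intro exI conjI)
    let ?a = "if i = 0 then 1 else 0"
    show "adj (Kstar n) i ?a" using that n unfolding adj_def Kstar_edge by auto
    show "adj (Kstar n) i (i + n)" using that unfolding adj_def Kstar_edge by auto
    show "?a \<noteq> i + n" using that n by auto
    show "\<not> adj (Kstar n) ?a (i + n)" using that n unfolding adj_def Kstar_edge by auto
  qed
qed

lemma bad_CK: "2 \<le> n \<Longrightarrow> n \<le> card {v \<in> verts (CK n). alpha (induced (CK n) (nbhd (CK n) v)) \<ge> 2}"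
proof (rule bad_count[OF wf_CK, where h="\<lambda>i. i"])
  assume n: "2 \<le> n"
  show "inj_on (\<lambda>i. i) {..<n}" by simp
  show "i \<in> verts (CK n)" if "i < n" for i using that by (simp add: CK_def verts_def)
  show "\<exists>a b. adj (CK n) i a \<and> adj (CK n) i b \<and> a \<noteq> b \<and> \<not> adj (CK n) a b" if "i < n" for i
  proof (intro exI conjI)
    let ?a = "if i = 0 then 1 else 0"
    show "adj (CK n) i ?a" using that n unfolding adj_def CK_edge by auto
    show "adj (CK n) i (i + n)" using that unfolding adj_def CK_edge by auto
    show "?a \<noteq> i + n" using that n by auto
    show "\<not> adj (CK n) ?a (i + n)" using that n unfolding adj_def CK_edge by auto
  qed
qed

lemma bad_nP3: "n \<le> card {v \<in> verts (nP3 n). alpha (induced (nP3 n) (nbhd (nP3 n) v)) \<ge> 2}"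
proof (rule bad_count[OF wf_nP3, where h="\<lambda>i. 3*i+1"])
  show "inj_on (\<lambda>i. 3*i+1) {..<n}" by (simp add: inj_on_def)
  show "3*i+1 \<in> verts (nP3 n)" if "i < n" for i using that by (simp add: nP3_def verts_def)
  show "\<exists>a b. adj (nP3 n) (3*i+1) a \<and> adj (nP3 n) (3*i+1) b \<and> a \<noteq> b \<and> \<not> adj (nP3 n) a b" if "i < n" for i
  proof (intro exI conjI)
    show "adj (nP3 n) (3*i+1) (3*i+0)" using that nP3_edge[of 1 0 i i n] unfolding adj_def by simp
    show "adj (nP3 n) (3*i+1) (3*i+2)" using that nP3_edge[of 1 2 i i n] unfolding adj_def by simp
    show "3*i+0 \<noteq> 3*i+2" by simp
    show "\<not> adj (nP3 n) (3*i+0) (3*i+2)" using that nP3_edge[of 0 2 i i n] unfolding adj_def by simp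
  qed
qed

lemma bad_K1nstar: "n \<le> card {v \<in> verts (K1nstar n). alpha (induced (K1nstar n) (nbhd (K1nstar n) v)) \<ge> 2}"
proof (rule bad_count[OF wf_K1nstar, where h="\<lambda>i. i+1"])
  show "inj_on (\<lambda>i. i+1) {..<n}" by simp
  show "i+1 \<in> verts (K1nstar n)" if "i < n" for i using that by (simp add: K1nstar_def verts_def)
  show "\<exists>a b. adj (K1nstar n) (i+1) a \<and> adj (K1nstar n) (i+1) b \<and> a \<noteq> b \<and> \<not> adj (K1nstar n) a b" if "i < n" for i
  proof (intro exI conjI)
    show "adj (K1nstar n) (i+1) 0" using that unfolding adj_def K1nstar_edge by simp
    show "adj (K1nstar n) (i+1) (i+1+n)" using that unfolding adj_def K1nstar_edge by simp
    show "(0::nat) \<noteq> i+1+n" by simp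
    show "\<not> adj (K1nstar n) 0 (i+1+n)" using that unfolding adj_def K1nstar_edge by simp
  qed
qed

lemma bad_K2n: "n \<le> card {v \<in> verts (K2n n). alpha (induced (K2n n) (nbhd (K2n n) v)) \<ge> 2}"
proof (rule bad_count[OF wf_K2n, where h="\<lambda>i. i+2"])
  show "inj_on (\<lambda>i. i+2) {..<n}" by (simp add: inj_on_def)
  show "i+2 \<in> verts (K2n n)" if "i < n" for i using that by (simp add: K2n_def verts_def)
  show "\<exists>a b. adj (K2n n) (i+2) a \<and> adj (K2n n) (i+2) b \<and> a \<noteq> b \<and> \<not> adj (K2n n) a b" if "i < n" for i
  proof (intro exI conjI)
    show "adj (K2n n) (i+2) 0" using that unfolding adj_def K2n_edge by simp
    show "adj (K2n n) (i+2) 1" using that unfolding adj_def K2n_edge by simp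
    show "(0::nat) \<noteq> 1" by simp
    show "\<not> adj (K2n n) 0 1" unfolding adj_def K2n_edge by simp
  qed
qed

lemma bad_E2K: "n \<le> card {v \<in> verts (E2K n). alpha (induced (E2K n) (nbhd (E2K n) v)) \<ge> 2}"
proof (rule bad_count[OF wf_E2K, where h="\<lambda>i. i+2"])
  show "inj_on (\<lambda>i. i+2) {..<n}" by (simp add: inj_on_def)
  show "i+2 \<in> verts (E2K n)" if "i < n" for i using that by (simp add: E2K_def verts_def)
  show "\<exists>a b. adj (E2K n) (i+2) a \<and> adj (E2K n) (i+2) b \<and> a \<noteq> b \<and> \<not> adj (E2K n) a b" if "i < n" for i
  proof (intro exI conjI)
    show "adj (E2K n) (i+2) 0" using that unfolding adj_def E2K_edge by simp
    show "adj (E2K n) (i+2) 1" using that unfolding adj_def E2K_edge by simp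
    show "(0::nat) \<noteq> 1" by simp
    show "\<not> adj (E2K n) 0 1" unfolding adj_def E2K_edge by simp
  qed
qed

theorem corollary1p9:
  fixes \<H> :: "graph set"
  assumes "\<forall>H\<in>\<H>. wf_graph H"
  shows "(\<exists>c::nat. \<forall>G. wf_graph G \<and> H_free \<H> G \<longrightarrow>
            card {v \<in> verts G. alpha (induced G (nbhd G v)) \<ge> 2} < c)
     \<longleftrightarrow> (\<exists>n::nat. n > 0 \<and>
            family_le \<H> {Kstar n, nP3 n, K1nstar n, K2n n, E2K n, CK n})"
proof
  assume "\<exists>c::nat. \<forall>G. wf_graph G \<and> H_free \<H> G \<longrightarrow>
            card {v \<in> verts G. alpha (induced G (nbhd G v)) \<ge> 2} < c"
  then obtain c :: nat where c: "\<And>G. wf_graph G \<Longrightarrow> H_free \<H> G \<Longrightarrow>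
            card {v \<in> verts G. alpha (induced G (nbhd G v)) \<ge> 2} < c" by blast
  define n where "n = c + 2"
  have key: "\<exists>H\<in>\<H>. induced_sub H F"
    if "wf_graph F" "n \<le> card {v \<in> verts F. alpha (induced F (nbhd F v)) \<ge> 2}" for F
  proof (rule ccontr)
    assume "\<not> (\<exists>H\<in>\<H>. induced_sub H F)"
    then have "H_free \<H> F" unfolding H_free_def by blast
    then have "card {v \<in> verts F. alpha (induced F (nbhd F v)) \<ge> 2} < c" using c that(1) by blast
    then show False using that(2) unfolding n_def by simp
  qed
  have n2: "2 \<le> n" unfolding n_def by simp
  have "family_le \<H> {Kstar n, nP3 n, K1nstar n, K2n n, E2K n, CK n}"
    unfolding family_le_def
    using key[OF wf_Kstar bad_Kstar[OF n2]] key[OF wf_nP3 bad_nP3] key[OF wf_K1nstar bad_K1nstar]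
      key[OF wf_K2n bad_K2n] key[OF wf_E2K bad_E2K] key[OF wf_CK bad_CK[OF n2]]
    by blast
  then show "\<exists>n::nat. n > 0 \<and> family_le \<H> {Kstar n, nP3 n, K1nstar n, K2n n, E2K n, CK n}"
    using n2 by (intro exI[of _ n]) simp
next
  assume "\<exists>n::nat. n > 0 \<and> family_le \<H> {Kstar n, nP3 n, K1nstar n, K2n n, E2K n, CK n}"
  then obtain n :: nat where fam: "family_le \<H> {Kstar n, nP3 n, K1nstar n, K2n n, E2K n, CK n}" by blast
  obtain Nc where Nc: "\<forall>G Q. wf_graph G \<and> finite Q \<and> Nc \<le> card Q \<and> (\<forall>u\<in>Q. \<forall>w\<in>Q. u \<noteq> w \<longrightarrow> adj G u w) \<and>
     (\<forall>u\<in>Q. \<exists>a b. adj G u a \<and> adj G u b \<and> a \<noteq> b \<and> \<not> adj G a b) \<longrightarrow> forb G n"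
    using clique_case[of n] by blast
  obtain Ni where Ni: "\<forall>G Q. wf_graph G \<and> finite Q \<and> Ni \<le> card Q \<and> (\<forall>u\<in>Q. \<forall>w\<in>Q. \<not> adj G u w) \<and>
     (\<forall>u\<in>Q. \<exists>a b. adj G u a \<and> adj G u b \<and> a \<noteq> b \<and> \<not> adj G a b) \<longrightarrow> forb G n"
    using ind_case[of n] by blast
  obtain r where r: "\<forall>(V::nat set) (E::nat set set). finite V \<and> card V \<ge> r \<longrightarrow>
    (\<exists>R \<subseteq> V. card R = Nc \<and> clique R E \<or> card R = Ni \<and> indep R E)"
    using ramsey2[of Nc Ni] by blast
  have "card {v \<in> verts G. alpha (induced G (nbhd G v)) \<ge> 2} < r" if G: "wf_graph G" "H_free \<H> G" for G
  proof (rule ccontr)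
    let ?B = "{v \<in> verts G. alpha (induced G (nbhd G v)) \<ge> 2}"
    assume "\<not> card ?B < r"
    then have rB: "r \<le> card ?B" by simp
    have finB: "finite ?B" using G(1) unfolding wf_graph_def by simp
    have badB: "\<forall>u\<in>?B. \<exists>a b. adj G u a \<and> adj G u b \<and> a \<noteq> b \<and> \<not> adj G a b"
      using alpha_ge2_iff[OF G(1)] by blast
    obtain R where R: "R \<subseteq> ?B" "card R = Nc \<and> clique R (edges G) \<or> card R = Ni \<and> indep R (edges G)"
      using r[rule_format, of ?B "edges G"] finB rB by blast
    have finR: "finite R" using R(1) finB finite_subset by blast
    have badR: "\<forall>u\<in>R. \<exists>a b. adj G u a \<and> adj G u b \<and> a \<noteq> b \<and> \<not> adj G a b" using badB R(1) by blast
    have "forb G n"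
      using R(2)
    proof
      assume h: "card R = Nc \<and> clique R (edges G)"
      then have "\<forall>u\<in>R. \<forall>w\<in>R. u \<noteq> w \<longrightarrow> adj G u w" unfolding clique_def adj_def by blast
      then show "forb G n" using Nc[rule_format, of G R] G(1) finR h badR by simp
    next
      assume h: "card R = Ni \<and> indep R (edges G)"
      have "\<forall>u\<in>R. \<forall>w\<in>R. \<not> adj G u w"
      proof (intro ballI)
        fix u w assume "u \<in> R" "w \<in> R"
        then show "\<not> adj G u w" using h adj_irrefl[OF G(1), of u] unfolding indep_def adj_def by (cases "u = w") auto
      qed
      then show "forb G n" using Ni[rule_format, of G R] G(1) finR h badR by simp
    qed
    then obtain F where F: "F \<in> {Kstar n, nP3 n, K1nstar n, K2n n, E2K n, CK n}" "induced_sub F G"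
      unfolding forb_def by blast
    obtain H where H: "H \<in> \<H>" "induced_sub H F" using fam F(1) unfolding family_le_def by blast
    have "induced_sub H G" using induced_sub_trans[OF H(2) F(2)] .
    then show False using G(2) H(1) unfolding H_free_def by blast
  qed
  then show "\<exists>c::nat. \<forall>G. wf_graph G \<and> H_free \<H> G \<longrightarrow>
            card {v \<in> verts G. alpha (induced G (nbhd G v)) \<ge> 2} < c" by blast
qed


end
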